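(* Let $\Psi=\{\psi_i:[a_i,b_i]\to[c_i,d_i]\}_{i=1}^k$ be an orientation preserving system of partial isometries and $\mathbf y$ an admissible vector for $\Psi$. If the interval exchange transformation $T_{\Psi,\mathbf y}$ fills the double suspension surface $\widehat\Sigma_{\Psi,\mathbf y}$, then the full restriction space $\mathscr R(T_{\Psi,\mathbf y})$ is rich.
   Context: A system of partial isometries is a collection $\Psi=\{\psi_1,\dots,\psi_k\}$ of isometries $\psi_i:[a_i,b_i]\to[c_i,d_i]$ between subintervals of $[0,1]$ of equal length, with $0\in\{a_1,c_1,\dots,a_k,c_k\}$ and $1\in\{b_1,d_1,\dots,b_k,d_k\}$; it is orientation preserving if every $\psi_i$ is a translation $x\mapsto x+c_i-a_i$. An admissible vector is $\mathbf y=(y_1,\dots,y_{2k})$ of pairwise distinct points of $(0,1)$. Choose $\varepsilon>0$ so small that the intervals $[y_j,y_j+\varepsilon]$ are pairwise disjoint and lie in $[0,1)$, and let $D=[0,1]^2\setminus\bigcup_{i=1}^k\big((a_i,b_i)\times(y_i,y_i+\varepsilon)\cup(c_i,d_i)\times(y_{i+k},y_{i+k}+\varepsilon)\big)$. The double suspension surface $\widehat\Sigma_{\Psi,\mathbf y}$ is obtained from $D$ by identifying, via translations, $[0,1]\times\{0\}$ with $[0,1]\times\{1\}$, $[a_i,b_i]\times\{y_i\}$ with $[c_i,d_i]\times\{y_{i+k}+\varepsilon\}$, and $[a_i,b_i]\times\{y_i+\varepsilon\}$ with $[c_i,d_i]\times\{y_{i+k}\}$, and collapsing to a point each vertical segment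 of $\partial D$ ($\{0\}\times[0,1]$, $\{1\}\times[0,1]$, $\{a_i\}\times[y_i,y_i+\varepsilon]$, $\{b_i\}\times[y_i,y_i+\varepsilon]$, $\{c_i\}\times[y_{i+k},y_{i+k}+\varepsilon]$, $\{d_i\}\times[y_{i+k},y_{i+k}+\varepsilon]$). The form $dx$ descends to a closed $1$-form $\omega$ defining a measured oriented foliation $\widehat{\mathcal F}_{\Psi,\mathbf y}$; its first return map to the transversal $\gamma=[0,1]\times\{0\}$ (parametrized by $x$) is an interval exchange transformation $T_{\Psi,\mathbf y}=T_{\rho,\mathbf b}$ for some permutation $\rho\in S_m$ and $\mathbf b\in\Delta^{m-1}$. $T_{\Psi,\mathbf y}$ fills $\widehat\Sigma_{\Psi,\mathbf y}$ if every leaf of $\widehat{\mathcal F}_{\Psi,\mathbf y}$ meets $\gamma$. Here an interval exchange transformation is $T_{\rho,\mathbf b}(x)=x-x_i+\widetilde x_{\rho^{-1}(i)}$ on $[x_{i-1},x_i)$, $x_i=\sum_{j\le i}b_j$, $\widetilde x_i=\sum_{j\le i}b_{\rho(j)}$, $x_0=\widetilde x_0=0$. Its full restriction space $\mathscr R(T_{\rho,\mathbf b})\subset(\mathbb R^m)^*$ is the real span of the integral linear functionals $r$ with $r(\mathbf b)=0$; a subspace $\mathscr R\subset(\mathbb R^m)^*$ is rich if $\mathrm{Ann}(\mathscr R)=\{v\in\mathbb R^m:r(v)=0\ \forall r\in\mathscr R\}$ is isotropic for the skew form $\langle e_i,e_j\rangle_\rho=1$ if $i<j$ and $\rho^{-1}(i)>\rho^{-1}(j)$,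 $-1$ if $i>j$ and $\rho^{-1}(i)<\rho^{-1}(j)$, $0$ otherwise. *)

theory Defs
  imports Complex_Main "HOL-Combinatorics.Permutations"
begin

text \<open>The system consists of k translations psi_i : [a i, b i] -> [c i, d i],
  x |-> x + c i - a i, for i < k (0-based indexing: the paper's psi_(i+1)).\<close>

definition op_system :: "nat \<Rightarrow> (nat \<Rightarrow> real) \<Rightarrow> (nat \<Rightarrow> real) \<Rightarrow> (nat \<Rightarrow> real) \<Rightarrow> (nat \<Rightarrow> real) \<Rightarrow> bool" where
  "op_system k a b c d \<longleftrightarrow>
     (\<forall>i<k. 0 \<le> a i \<and> a i < b i \<and> b i \<le> 1 \<and> 0 \<le> c i \<and> c i < d i \<and> d i \<le> 1
            \<and> d i - c i = b i - a i)
   \<and> (\<exists>i<k. a i = 0 \<or> c i = 0) \<and> (\<exists>i<k. b i = 1 \<or> d i = 1)"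

text \<open>Admissible vector y_0,...,y_(2k-1) (0-based; y j for j<k belongs to [a j,b j],
  y (j+k) to [c j, d j]).\<close>

definition admissible :: "nat \<Rightarrow> (nat \<Rightarrow> real) \<Rightarrow> bool" where
  "admissible k y \<longleftrightarrow> (\<forall>j<2*k. 0 < y j \<and> y j < 1) \<and> inj_on y {..<2*k}"

definition eps_ok :: "nat \<Rightarrow> (nat \<Rightarrow> real) \<Rightarrow> real \<Rightarrow> bool" where
  "eps_ok k y \<epsilon> \<longleftrightarrow> 0 < \<epsilon> \<and> (\<forall>j<2*k. y j + \<epsilon> < 1)
     \<and> (\<forall>j<2*k. \<forall>j'<2*k. j \<noteq> j' \<longrightarrow> y j + \<epsilon> < y j' \<or> y j' + \<epsilon> < y j)"

text \<open>Removed rectangle number j (j < 2k) is (Lft j, Rgt j) x (y j, y j + eps);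
  its bottom edge is glued to the top edge of the partner rectangle, with
  horizontal translation by Lft (partner j) - Lft j.\<close>

definition Lft :: "nat \<Rightarrow> (nat \<Rightarrow> real) \<Rightarrow> (nat \<Rightarrow> real) \<Rightarrow> nat \<Rightarrow> real" where
  "Lft k a c j = (if j < k then a j else c (j - k))"

definition Rgt :: "nat \<Rightarrow> (nat \<Rightarrow> real) \<Rightarrow> (nat \<Rightarrow> real) \<Rightarrow> nat \<Rightarrow> real" where
  "Rgt k b d j = (if j < k then b j else d (j - k))"

definition partner :: "nat \<Rightarrow> nat \<Rightarrow> nat" where
  "partner k j = (if j < k then j + k else j - k)"

text \<open>A start (x,s) is the lower endpoint of a maximal upward vertical segment of
  the foliation: either on gamma (s = 0) or on the top edge of a rectangle
  (possibly at a corner, i.e. a singular point, then the segment is a separatrix).\<close>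

definition is_start :: "nat \<Rightarrow> (nat \<Rightarrow> real) \<Rightarrow> (nat \<Rightarrow> real) \<Rightarrow> (nat \<Rightarrow> real) \<Rightarrow> (nat \<Rightarrow> real)
     \<Rightarrow> (nat \<Rightarrow> real) \<Rightarrow> real \<Rightarrow> real \<times> real \<Rightarrow> bool" where
  "is_start k a b c d y \<epsilon> p \<longleftrightarrow> 0 < fst p \<and> fst p < 1 \<and>
     (snd p = 0 \<or> (\<exists>j<2*k. snd p = y j + \<epsilon> \<and> Lft k a c j \<le> fst p \<and> fst p \<le> Rgt k b d j))"

definition obst :: "nat \<Rightarrow> (nat \<Rightarrow> real) \<Rightarrow> (nat \<Rightarrow> real) \<Rightarrow> (nat \<Rightarrow> real) \<Rightarrow> (nat \<Rightarrow> real)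
     \<Rightarrow> (nat \<Rightarrow> real) \<Rightarrow> real \<Rightarrow> real \<Rightarrow> nat \<Rightarrow> bool" where
  "obst k a b c d y x s j \<longleftrightarrow> j < 2*k \<and> Lft k a c j \<le> x \<and> x \<le> Rgt k b d j \<and> s < y j"

text \<open>The segment starting at p hits the bottom edge of a rectangle in its interior
  and continues on the glued top edge of the partner rectangle (hitting it at an
  endpoint means reaching a singularity: no step).\<close>

definition pass_step :: "nat \<Rightarrow> (nat \<Rightarrow> real) \<Rightarrow> (nat \<Rightarrow> real) \<Rightarrow> (nat \<Rightarrow> real) \<Rightarrow> (nat \<Rightarrow> real)
     \<Rightarrow> (nat \<Rightarrow> real) \<Rightarrow> real \<Rightarrow> real \<times> real \<Rightarrow> real \<times> real \<Rightarrow> bool" where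
  "pass_step k a b c d y \<epsilon> p q \<longleftrightarrow> is_start k a b c d y \<epsilon> p \<and>
     (\<exists>j. obst k a b c d y (fst p) (snd p) j
        \<and> (\<forall>j'. obst k a b c d y (fst p) (snd p) j' \<longrightarrow> y j \<le> y j')
        \<and> Lft k a c j < fst p \<and> fst p < Rgt k b d j
        \<and> q = (fst p + (Lft k a c (partner k j) - Lft k a c j), y (partner k j) + \<epsilon>))"

text \<open>The segment starting at p reaches height 1, i.e. gamma.\<close>

definition top_hit :: "nat \<Rightarrow> (nat \<Rightarrow> real) \<Rightarrow> (nat \<Rightarrow> real) \<Rightarrow> (nat \<Rightarrow> real) \<Rightarrow> (nat \<Rightarrow> real)
     \<Rightarrow> (nat \<Rightarrow> real) \<Rightarrow> real \<Rightarrow> real \<times> real \<Rightarrow> bool" where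
  "top_hit k a b c d y \<epsilon> p \<longleftrightarrow> is_start k a b c d y \<epsilon> p \<and> (\<forall>j. \<not> obst k a b c d y (fst p) (snd p) j)"

definition leaf_step :: "nat \<Rightarrow> (nat \<Rightarrow> real) \<Rightarrow> (nat \<Rightarrow> real) \<Rightarrow> (nat \<Rightarrow> real) \<Rightarrow> (nat \<Rightarrow> real)
     \<Rightarrow> (nat \<Rightarrow> real) \<Rightarrow> real \<Rightarrow> real \<times> real \<Rightarrow> real \<times> real \<Rightarrow> bool" where
  "leaf_step k a b c d y \<epsilon> p q \<longleftrightarrow> pass_step k a b c d y \<epsilon> p q
     \<or> (top_hit k a b c d y \<epsilon> p \<and> q = (fst p, 0))"

text \<open>First return map T_(Psi,y) to gamma, as a (functional) relation: x returns to x'.\<close>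

definition first_return :: "nat \<Rightarrow> (nat \<Rightarrow> real) \<Rightarrow> (nat \<Rightarrow> real) \<Rightarrow> (nat \<Rightarrow> real) \<Rightarrow> (nat \<Rightarrow> real)
     \<Rightarrow> (nat \<Rightarrow> real) \<Rightarrow> real \<Rightarrow> real \<Rightarrow> real \<Rightarrow> bool" where
  "first_return k a b c d y \<epsilon> x x' \<longleftrightarrow> 0 < x \<and> x < 1 \<and>
     (\<exists>s. (pass_step k a b c d y \<epsilon>)\<^sup>*\<^sup>* (x, 0) (x', s) \<and> top_hit k a b c d y \<epsilon> (x', s))"

text \<open>T_(Psi,y) fills the surface: every leaf (a connected chain of segments,
  singular points removed) contains a point of gamma.\<close>

definition fills :: "nat \<Rightarrow> (nat \<Rightarrow> real) \<Rightarrow> (nat \<Rightarrow> real) \<Rightarrow> (nat \<Rightarrow> real) \<Rightarrow> (nat \<Rightarrow> real)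
     \<Rightarrow> (nat \<Rightarrow> real) \<Rightarrow> real \<Rightarrow> bool" where
  "fills k a b c d y \<epsilon> \<longleftrightarrow> (\<forall>p. is_start k a b c d y \<epsilon> p \<longrightarrow>
     (\<exists>x'. (\<lambda>u v. leaf_step k a b c d y \<epsilon> u v \<or> leaf_step k a b c d y \<epsilon> v u)\<^sup>*\<^sup>* p (x', 0)))"

section \<open>Interval exchange transformations (indices 1..m)\<close>

definition xpt :: "(nat \<Rightarrow> real) \<Rightarrow> nat \<Rightarrow> real" where
  "xpt lam i = (\<Sum>j\<in>{1..i}. lam j)"

definition xtl :: "(nat \<Rightarrow> nat) \<Rightarrow> (nat \<Rightarrow> real) \<Rightarrow> nat \<Rightarrow> real" where
  "xtl \<rho> lam i = (\<Sum>j\<in>{1..i}. lam (\<rho> j))"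

definition iet_map :: "nat \<Rightarrow> (nat \<Rightarrow> nat) \<Rightarrow> (nat \<Rightarrow> real) \<Rightarrow> real \<Rightarrow> real" where
  "iet_map m \<rho> lam x =
     (let i = (THE i. i \<in> {1..m} \<and> xpt lam (i - 1) \<le> x \<and> x < xpt lam i)
      in x - xpt lam i + xtl \<rho> lam (inv_into {1..m} \<rho> i))"

definition iet_data :: "nat \<Rightarrow> (nat \<Rightarrow> nat) \<Rightarrow> (nat \<Rightarrow> real) \<Rightarrow> bool" where
  "iet_data m \<rho> lam \<longleftrightarrow> \<rho> permutes {1..m} \<and> (\<forall>i\<in>{1..m}. 0 < lam i) \<and> (\<Sum>i\<in>{1..m}. lam i) = 1"

text \<open>Linear functionals on R^m are coefficient vectors supported on {1..m}.\<close>

definition pair :: "nat \<Rightarrow> (nat \<Rightarrow> real) \<Rightarrow> (nat \<Rightarrow> real) \<Rightarrow> real" where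
  "pair m r v = (\<Sum>i\<in>{1..m}. r i * v i)"

definition supp_in :: "nat \<Rightarrow> (nat \<Rightarrow> real) \<Rightarrow> bool" where
  "supp_in m v \<longleftrightarrow> (\<forall>i. i \<notin> {1..m} \<longrightarrow> v i = 0)"

definition integral_restrictions :: "nat \<Rightarrow> (nat \<Rightarrow> real) \<Rightarrow> (nat \<Rightarrow> real) set" where
  "integral_restrictions m lam =
     {r. supp_in m r \<and> (\<forall>i\<in>{1..m}. r i \<in> \<int>) \<and> pair m r lam = 0}"

definition restriction_space :: "nat \<Rightarrow> (nat \<Rightarrow> real) \<Rightarrow> (nat \<Rightarrow> real) set" where
  "restriction_space m lam =
     {r. \<exists>F coef. finite F \<and> F \<subseteq> integral_restrictions m lam \<and> r = (\<lambda>i. \<Sum>f\<in>F. coef f * f i)}"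

definition Ann :: "nat \<Rightarrow> (nat \<Rightarrow> real) set \<Rightarrow> (nat \<Rightarrow> real) set" where
  "Ann m R = {v. supp_in m v \<and> (\<forall>r\<in>R. pair m r v = 0)}"

definition skew_coeff :: "nat \<Rightarrow> (nat \<Rightarrow> nat) \<Rightarrow> nat \<Rightarrow> nat \<Rightarrow> real" where
  "skew_coeff m \<rho> i j =
     (if i < j \<and> inv_into {1..m} \<rho> i > inv_into {1..m} \<rho> j then 1
      else if i > j \<and> inv_into {1..m} \<rho> i < inv_into {1..m} \<rho> j then -1
      else 0)"

definition skew :: "nat \<Rightarrow> (nat \<Rightarrow> nat) \<Rightarrow> (nat \<Rightarrow> real) \<Rightarrow> (nat \<Rightarrow> real) \<Rightarrow> real" where
  "skew m \<rho> v w = (\<Sum>i\<in>{1..m}. \<Sum>j\<in>{1..m}. v i * w j * skew_coeff m \<rho> i j)"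

definition rich :: "nat \<Rightarrow> (nat \<Rightarrow> nat) \<Rightarrow> (nat \<Rightarrow> real) set \<Rightarrow> bool" where
  "rich m \<rho> R \<longleftrightarrow> (\<forall>v\<in>Ann m R. \<forall>w\<in>Ann m R. skew m \<rho> v w = 0)"

end

theory Submission
  imports Defs "HOL-Analysis.Continuum_Not_Denumerable"
begin

definition qsc :: "rat \<Rightarrow> real \<Rightarrow> real" where "qsc q x = real_of_rat q * x"

lemma qsc_vs: "vector_space qsc"
  by unfold_locales (auto simp: qsc_def algebra_simps of_rat_add of_rat_mult)

interpretation Q: vector_space qsc by (rule qsc_vs)
interpretation QQ: vector_space_pair qsc qsc by unfold_locales

definition qlin :: "(real \<Rightarrow> real) \<Rightarrow> bool" where "qlin g \<longleftrightarrow> module_hom qsc qsc g"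

lemma qlin_add: "qlin g \<Longrightarrow> g (x + y) = g x + g y"
  unfolding qlin_def by (rule module_hom.add)
lemma qlin_scale: "qlin g \<Longrightarrow> g (real_of_rat q * x) = real_of_rat q * g x"
  unfolding qlin_def using module_hom.scale[of qsc qsc g q x] by (simp add: qsc_def)
lemma qlin_sum: "qlin g \<Longrightarrow> g (\<Sum>i\<in>S. h i) = (\<Sum>i\<in>S. g (h i))"
  unfolding qlin_def by (rule module_hom.sum)
lemma qlin_diff: "qlin g \<Longrightarrow> g (x - y) = g x - g y"
  unfolding qlin_def by (rule module_hom.diff)
lemma qlin_0: "qlin g \<Longrightarrow> g 0 = 0"
  unfolding qlin_def by (rule module_hom.zero)
lemma qlin_int: "qlin g \<Longrightarrow> g (of_int n * x) = of_int n * g x"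
  using qlin_scale[of g "of_int n" x] by simp
lemma qlin_skew: "qlin g \<Longrightarrow> g (skew_coeff m \<rho> i j * x) = skew_coeff m \<rho> i j * g x"
  using qlin_int[of g 1 x] qlin_int[of g "-1" x] qlin_int[of g 0 x]
  unfolding skew_coeff_def by auto

lemma denom_exists:
  assumes "finite S"
  shows "\<exists>D::int. D > 0 \<and> (\<forall>j\<in>S. real_of_rat (c j) * of_int D \<in> \<int>)"
  using assms
proof (induction S)
  case empty then show ?case by (intro exI[of _ 1]) auto
next
  case (insert x S)
  then obtain D where D: "D > 0" "\<forall>j\<in>S. real_of_rat (c j) * of_int D \<in> \<int>" by auto
  obtain n e where ne: "quotient_of (c x) = (n, e)" by force
  have e: "e > 0" using quotient_of_denom_pos[OF ne] .
  have cx: "c x = of_int n / of_int e" using quotient_of_div[OF ne] .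
  have "real_of_rat (c x) * of_int (D * e) = of_int (n * D)"
    using e by (simp add: cx of_rat_divide field_simps)
  moreover have "real_of_rat (c j) * of_int (D * e) \<in> \<int>" if "j \<in> S" for j
  proof -
    have "real_of_rat (c j) * of_int (D * e) = (real_of_rat (c j) * of_int D) * of_int e" by simp
    then show ?thesis using D(2) that by (metis Ints_mult Ints_of_int)
  qed
  ultimately have "\<forall>j\<in>insert x S. real_of_rat (c j) * of_int (D * e) \<in> \<int>"
    by (metis Ints_of_int insert_iff)
  then show ?case using D e by (intro exI[of _ "D * e"]) auto
qed

lemma rat_relation_in_rs:
  assumes "(\<Sum>j\<in>{1..m}. real_of_rat (c j) * lam j) = 0"
  shows "(\<lambda>j. if j \<in> {1..m} then real_of_rat (c j) else 0) \<in> restriction_space m lam"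
proof -
  obtain D :: int where D: "D > 0" "\<forall>j\<in>{1..m}. real_of_rat (c j) * of_int D \<in> \<int>"
    using denom_exists[of "{1..m}" c] by auto
  define r where "r = (\<lambda>j. if j \<in> {1..m} then real_of_rat (c j) * of_int D else 0)"
  have "pair m r lam = of_int D * (\<Sum>j\<in>{1..m}. real_of_rat (c j) * lam j)"
    unfolding pair_def r_def by (simp add: sum_distrib_left mult_ac)
  then have "r \<in> integral_restrictions m lam"
    using D assms unfolding integral_restrictions_def supp_in_def r_def by auto
  moreover have "(\<lambda>j. if j \<in> {1..m} then real_of_rat (c j) else 0) = (\<lambda>i. \<Sum>f\<in>{r}. (1 / of_int D) * f i)"
    using D unfolding r_def by (auto simp: fun_eq_iff)
  ultimately show ?thesis unfolding restriction_space_def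
    by (intro CollectI exI[of _ "{r}"] exI[of _ "\<lambda>_. 1 / of_int D"]) auto
qed

lemma ann_repr:
  assumes v: "v \<in> Ann m (restriction_space m lam)"
  shows "\<exists>g. qlin g \<and> (\<forall>i\<in>{1..m}. g (lam i) = v i)"
proof -
  define L where "L = lam ` {1..m}"
  obtain B where B: "B \<subseteq> L" "Q.independent B" "L \<subseteq> Q.span B"
    using Q.maximal_independent_subset[of L] by blast
  have finB: "finite B" by (rule finite_subset[OF B(1)]) (simp add: L_def)
  define ib where "ib b = (SOME i. i \<in> {1..m} \<and> lam i = b)" for b
  have ib: "ib b \<in> {1..m} \<and> lam (ib b) = b" if "b \<in> B" for b
  proof -
    from that B(1) obtain i where "i \<in> {1..m}" "lam i = b" unfolding L_def by auto
    then show ?thesis unfolding ib_def by (intro someI[of "\<lambda>i. i \<in> {1..m} \<and> lam i = b" i]) simp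
  qed
  obtain g where g: "Vector_Spaces.linear qsc qsc g" "\<forall>b\<in>B. g b = v (ib b)"
    using QQ.linear_independent_extend[OF B(2), of "\<lambda>b. v (ib b)"] by blast
  have gm: "module_hom qsc qsc g" by (rule module_hom_linearI[OF g(1)])
  have "g (lam i) = v i" if i: "i \<in> {1..m}" for i
  proof -
    have "lam i \<in> Q.span B" using B(3) i unfolding L_def by auto
    then obtain u where u: "lam i = (\<Sum>b\<in>B. qsc (u b) b)"
      using Q.span_finite[OF finB] by auto
    have gl: "g (lam i) = (\<Sum>b\<in>B. real_of_rat (u b) * v (ib b))"
    proof -
      have "g (lam i) = (\<Sum>b\<in>B. g (qsc (u b) b))" unfolding u by (rule module_hom.sum[OF gm])
      also have "\<dots> = (\<Sum>b\<in>B. qsc (u b) (g b))" by (simp add: module_hom.scale[OF gm])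
      finally show ?thesis using g(2) by (simp add: qsc_def)
    qed
    define c where "c j = (if j = i then 1 else 0) - (\<Sum>b\<in>B. if ib b = j then u b else 0)" for j
    have key: "(\<Sum>j\<in>{1..m}. real_of_rat (c j) * w j) = w i - (\<Sum>b\<in>B. real_of_rat (u b) * w (ib b))" for w
    proof -
      have "(\<Sum>j\<in>{1..m}. real_of_rat (c j) * w j) =
          (\<Sum>j\<in>{1..m}. (if j = i then w j else 0)) - (\<Sum>j\<in>{1..m}. \<Sum>b\<in>B. (if ib b = j then real_of_rat (u b) * w j else 0))"
      proof -
        have "real_of_rat (c j) * w j = (if j = i then w j else 0) - (\<Sum>b\<in>B. (if ib b = j then real_of_rat (u b) * w j else 0))" for j
          unfolding c_def of_rat_diff of_rat_sum left_diff_distrib sum_distrib_right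
          by (intro arg_cong2[where f="(-)"] sum.cong) auto
        then show ?thesis by (simp add: sum_subtractf)
      qed
      also have "\<dots> = w i - (\<Sum>b\<in>B. \<Sum>j\<in>{1..m}. (if ib b = j then real_of_rat (u b) * w j else 0))"
        using i by (subst sum.swap) simp
      also have "\<dots> = w i - (\<Sum>b\<in>B. real_of_rat (u b) * w (ib b))"
        using ib by (intro arg_cong2[where f="(-)"] refl sum.cong) (auto simp: sum.delta)
      finally show ?thesis .
    qed
    have "(\<Sum>j\<in>{1..m}. real_of_rat (c j) * lam j) = 0"
      using key[of lam] u ib by (simp add: qsc_def)
    then have "(\<lambda>j. if j \<in> {1..m} then real_of_rat (c j) else 0) \<in> restriction_space m lam"
      by (rule rat_relation_in_rs)
    then have "pair m (\<lambda>j. if j \<in> {1..m} then real_of_rat (c j) else 0) v = 0"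
      using v unfolding Ann_def by auto
    then have "(\<Sum>j\<in>{1..m}. real_of_rat (c j) * v j) = 0" unfolding pair_def by simp
    then show ?thesis using key[of v] gl by simp
  qed
  then show ?thesis using gm unfolding qlin_def by blast
qed

lemma rich_of:
  assumes H: "\<And>f g. qlin f \<Longrightarrow> qlin g \<Longrightarrow>
     (\<Sum>i\<in>{1..m}. f (lam i) * g (\<Sum>j\<in>{1..m}. skew_coeff m \<rho> i j * lam j)) = 0"
  shows "rich m \<rho> (restriction_space m lam)"
  unfolding rich_def
proof (intro ballI)
  fix v w assume v: "v \<in> Ann m (restriction_space m lam)" and w: "w \<in> Ann m (restriction_space m lam)"
  obtain f where f: "qlin f" "\<forall>i\<in>{1..m}. f (lam i) = v i" using ann_repr[OF v] by blast
  obtain g where g: "qlin g" "\<forall>i\<in>{1..m}. g (lam i) = w i" using ann_repr[OF w] by blast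
  have "skew m \<rho> v w = (\<Sum>i\<in>{1..m}. f (lam i) * g (\<Sum>j\<in>{1..m}. skew_coeff m \<rho> i j * lam j))"
    unfolding skew_def
  proof (intro sum.cong refl)
    fix i assume i: "i \<in> {1..m}"
    have "g (\<Sum>j\<in>{1..m}. skew_coeff m \<rho> i j * lam j) = (\<Sum>j\<in>{1..m}. skew_coeff m \<rho> i j * w j)"
      using g by (simp add: qlin_sum[OF g(1)] qlin_skew[OF g(1)])
    then show "(\<Sum>j\<in>{1..m}. v i * w j * skew_coeff m \<rho> i j) =
        f (lam i) * g (\<Sum>j\<in>{1..m}. skew_coeff m \<rho> i j * lam j)"
      using f i by (simp add: sum_distrib_left mult_ac)
  qed
  then show "skew m \<rho> v w = 0" using H[OF f(1) g(1)] by simp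
qed


lemma xpt_Suc: "xpt lam (Suc i) = xpt lam i + lam (Suc i)"
  unfolding xpt_def by (simp add: sum.cl_ivl_Suc)
lemma xpt_0[simp]: "xpt lam 0 = 0" unfolding xpt_def by simp

lemma xpt_mono_strict:
  assumes pos: "\<forall>i\<in>{1..m}. 0 < lam i" and "i < i'" "i' \<le> m"
  shows "xpt lam i < xpt lam i'"
  using assms(2,3)
proof (induction i')
  case 0 then show ?case by simp
next
  case (Suc i')
  have "lam (Suc i') > 0" using pos Suc.prems by auto
  then show ?case using Suc by (cases "i = i'") (auto simp: xpt_Suc)
qed

lemma xpt_mono:
  assumes pos: "\<forall>i\<in>{1..m}. 0 < lam i" and "i \<le> i'" "i' \<le> m"
  shows "xpt lam i \<le> xpt lam i'"
  using xpt_mono_strict[OF pos, of i i'] assms by (cases "i = i'") auto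

lemma xpt_diff: "i \<ge> 1 \<Longrightarrow> xpt lam i - xpt lam (i - 1) = lam i"
  using xpt_Suc[of lam "i - 1"] by simp

lemma idx_unique:
  assumes pos: "\<forall>i\<in>{1..m}. 0 < lam i"
    and i: "i \<in> {1..m}" "xpt lam (i - 1) \<le> x" "x < xpt lam i"
    and i': "i' \<in> {1..m}" "xpt lam (i' - 1) \<le> x" "x < xpt lam i'"
  shows "i = i'"
proof (rule ccontr)
  assume "i \<noteq> i'"
  then consider "i < i'" | "i' < i" by linarith
  then show False
  proof cases
    case 1 then have "xpt lam i \<le> xpt lam (i' - 1)" using xpt_mono[OF pos, of i "i' - 1"] i' by auto
    then show False using i i' by auto
  next
    case 2 then have "xpt lam i' \<le> xpt lam (i - 1)" using xpt_mono[OF pos, of i' "i - 1"] i by auto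
    then show False using i i' by auto
  qed
qed

lemma idx_exists:
  assumes pos: "\<forall>i\<in>{1..m}. 0 < lam i" and tot: "xpt lam m = 1" and x: "0 \<le> x" "x < 1"
  shows "\<exists>i\<in>{1..m}. xpt lam (i - 1) \<le> x \<and> x < xpt lam i"
proof -
  have ex: "\<exists>i. x < xpt lam i" using tot x by (intro exI[of _ m]) simp
  define i where "i = (LEAST i. x < xpt lam i)"
  have xi: "x < xpt lam i" unfolding i_def using ex by (rule LeastI_ex)
  have im: "i \<le> m" unfolding i_def using tot x by (intro Least_le) auto
  have i1: "i \<ge> 1" using xi x by (cases i) auto
  have "\<not> x < xpt lam (i - 1)" unfolding i_def using i1 i_def
    by (metis One_nat_def Suc_le_eq diff_less not_less_Least zero_less_one)
  then show ?thesis using xi im i1 by (intro bexI[of _ i]) auto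
qed

lemma iet_map_on:
  assumes pos: "\<forall>i\<in>{1..m}. 0 < lam i"
    and i: "i \<in> {1..m}" "xpt lam (i - 1) \<le> x" "x < xpt lam i"
  shows "iet_map m \<rho> lam x = x - xpt lam i + xtl \<rho> lam (inv_into {1..m} \<rho> i)"
proof -
  have "(THE i. i \<in> {1..m} \<and> xpt lam (i - 1) \<le> x \<and> x < xpt lam i) = i"
    using i idx_unique[OF pos] by (intro the_equality) blast+
  then show ?thesis unfolding iet_map_def Let_def by simp
qed

lemma xtl_xpt: "xtl \<rho> lam = xpt (\<lambda>j. lam (\<rho> j))"
  unfolding xtl_def xpt_def by (simp add: fun_eq_iff)

lemma iet_basic:
  assumes "iet_data m \<rho> lam"
  shows "\<forall>i\<in>{1..m}. 0 < lam (\<rho> i)" "xpt lam m = 1" "xpt (\<lambda>j. lam (\<rho> j)) m = 1"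
proof -
  have p: "\<rho> permutes {1..m}" using assms unfolding iet_data_def by auto
  show "\<forall>i\<in>{1..m}. 0 < lam (\<rho> i)" using assms permutes_in_image[OF p] unfolding iet_data_def by auto
  show "xpt lam m = 1" using assms unfolding iet_data_def xpt_def by auto
  have "sum lam (\<rho> ` {1..m}) = (\<Sum>j\<in>{1..m}. lam (\<rho> j))"
    using sum.reindex[OF permutes_inj_on[OF p], of lam "{1..m}"] by (simp add: comp_def)
  then have "(\<Sum>j\<in>{1..m}. lam (\<rho> j)) = (\<Sum>j\<in>{1..m}. lam j)"
    using permutes_image[OF p] by simp
  then show "xpt (\<lambda>j. lam (\<rho> j)) m = 1" using assms unfolding iet_data_def xpt_def by auto
qed

lemma iet_surj:
  assumes D: "iet_data m \<rho> lam" and w: "0 \<le> w" "w < 1"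
  shows "\<exists>x. 0 \<le> x \<and> x < 1 \<and> iet_map m \<rho> lam x = w"
proof -
  have p: "\<rho> permutes {1..m}" and pos: "\<forall>i\<in>{1..m}. 0 < lam i" using D unfolding iet_data_def by auto
  note B = iet_basic[OF D]
  obtain q where q: "q \<in> {1..m}" "xpt (\<lambda>j. lam (\<rho> j)) (q - 1) \<le> w" "w < xpt (\<lambda>j. lam (\<rho> j)) q"
    using idx_exists[OF B(1) B(3) w] by blast
  define i where "i = \<rho> q"
  have i: "i \<in> {1..m}" unfolding i_def using permutes_in_image[OF p] q(1) by auto
  have inv: "inv_into {1..m} \<rho> i = q" unfolding i_def using permutes_inj_on[OF p] q(1) by (simp add: inv_into_f_f)
  define x where "x = w - xpt (\<lambda>j. lam (\<rho> j)) q + xpt lam i"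
  have d1: "xpt (\<lambda>j. lam (\<rho> j)) q - xpt (\<lambda>j. lam (\<rho> j)) (q - 1) = lam i"
    using xpt_diff[of q "\<lambda>j. lam (\<rho> j)"] q(1) unfolding i_def by auto
  have d2: "xpt lam i - xpt lam (i - 1) = lam i" using xpt_diff[of i lam] i by auto
  have xi: "xpt lam (i - 1) \<le> x" "x < xpt lam i" unfolding x_def using q d1 d2 by auto
  have "iet_map m \<rho> lam x = w"
    using iet_map_on[OF pos i xi] inv unfolding x_def xtl_xpt by simp
  moreover have "0 \<le> xpt lam (i - 1)" using xpt_mono[OF pos, of 0 "i - 1"] i by auto
  moreover have "xpt lam i \<le> 1" using xpt_mono[OF pos, of i m] i B(2) by auto
  ultimately show ?thesis using xi by (intro exI[of _ x]) auto
qed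

lemma iet_transl:
  assumes D: "iet_data m \<rho> lam" and i: "i \<in> {1..m}"
  shows "xtl \<rho> lam (inv_into {1..m} \<rho> i) - xpt lam i = (\<Sum>j\<in>{1..m}. skew_coeff m \<rho> i j * lam j)"
proof -
  have p: "\<rho> permutes {1..m}" using D unfolding iet_data_def by auto
  have inj: "inj_on \<rho> {1..m}" using permutes_inj_on[OF p] .
  have img: "\<rho> ` {1..m} = {1..m}" using permutes_image[OF p] .
  define iv where "iv = inv_into {1..m} \<rho>"
  have iv_in: "j \<in> {1..m} \<Longrightarrow> iv j \<in> {1..m}" for j unfolding iv_def using img by (metis inv_into_into)
  have riv: "j \<in> {1..m} \<Longrightarrow> \<rho> (iv j) = j" for j unfolding iv_def using img by (metis f_inv_into_f)
  have ivr: "q \<in> {1..m} \<Longrightarrow> iv (\<rho> q) = q" for q unfolding iv_def using inj by (simp add: inv_into_f_f)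
  have ivinj: "j \<in> {1..m} \<Longrightarrow> j' \<in> {1..m} \<Longrightarrow> iv j = iv j' \<Longrightarrow> j = j'" for j j' using riv by metis
  have Q: "iv i \<in> {1..m}" using iv_in i .
  have set: "\<rho> ` {1..iv i} = {j\<in>{1..m}. iv j \<le> iv i}"
  proof
    show "\<rho> ` {1..iv i} \<subseteq> {j\<in>{1..m}. iv j \<le> iv i}"
    proof
      fix j assume "j \<in> \<rho> ` {1..iv i}"
      then obtain q where "q \<in> {1..iv i}" "j = \<rho> q" by auto
      then show "j \<in> {j\<in>{1..m}. iv j \<le> iv i}" using Q img ivr by force
    qed
    show "{j\<in>{1..m}. iv j \<le> iv i} \<subseteq> \<rho> ` {1..iv i}"
    proof
      fix j assume "j \<in> {j\<in>{1..m}. iv j \<le> iv i}"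
      then have "iv j \<in> {1..iv i}" "\<rho> (iv j) = j" using iv_in riv by auto
      then show "j \<in> \<rho> ` {1..iv i}" by (metis imageI)
    qed
  qed
  have "xtl \<rho> lam (iv i) = (\<Sum>j\<in>\<rho> ` {1..iv i}. lam j)"
    unfolding xtl_def using inj Q by (subst sum.reindex) (auto intro: inj_on_subset)
  also have "\<dots> = (\<Sum>j\<in>{1..m}. if iv j \<le> iv i then lam j else 0)" unfolding set by (rule sum.inter_filter) simp
  finally have A: "xtl \<rho> lam (iv i) = (\<Sum>j\<in>{1..m}. if iv j \<le> iv i then lam j else 0)" .
  have "xpt lam i = (\<Sum>j\<in>{j\<in>{1..m}. j \<le> i}. lam j)" unfolding xpt_def
    using i by (intro sum.cong) auto
  also have "\<dots> = (\<Sum>j\<in>{1..m}. if j \<le> i then lam j else 0)" by (rule sum.inter_filter) simp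
  finally have Bx: "xpt lam i = (\<Sum>j\<in>{1..m}. if j \<le> i then lam j else 0)" .
  have "xtl \<rho> lam (iv i) - xpt lam i = (\<Sum>j\<in>{1..m}. (if iv j \<le> iv i then lam j else 0) - (if j \<le> i then lam j else 0))"
    unfolding A Bx by (simp add: sum_subtractf)
  also have "\<dots> = (\<Sum>j\<in>{1..m}. skew_coeff m \<rho> i j * lam j)"
  proof (intro sum.cong refl)
    fix j assume j: "j \<in> {1..m}"
    have "iv j = iv i \<Longrightarrow> j = i" using ivinj j i by blast
    then show "(if iv j \<le> iv i then lam j else 0) - (if j \<le> i then lam j else 0) = skew_coeff m \<rho> i j * lam j"
      unfolding skew_coeff_def iv_def[symmetric] by (cases "i < j"; cases "j < i"; cases "iv i < iv j"; cases "iv j < iv i") auto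
  qed
  finally show ?thesis unfolding iv_def .
qed


lemma tiling:
  fixes uq vq :: "'q \<Rightarrow> real"
  assumes "finite Q" "qlin f" "l \<le> r"
    and inside: "\<And>q. q \<in> Q \<Longrightarrow> l \<le> uq q \<and> uq q < vq q \<and> vq q \<le> r"
    and disj: "\<And>q q'. q \<in> Q \<Longrightarrow> q' \<in> Q \<Longrightarrow> q \<noteq> q' \<Longrightarrow> {uq q<..<vq q} \<inter> {uq q'<..<vq q'} = {}"
    and cov: "countable ({l<..<r} - (\<Union>q\<in>Q. {uq q<..<vq q}))"
  shows "(\<Sum>q\<in>Q. f (vq q - uq q)) = f (r - l)"
  using assms
proof (induction "card Q" arbitrary: Q l)
  case 0
  then have Q: "Q = {}" by auto
  then have "countable {l<..<r}" using "0.prems" by simp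
  then have "l = r" using uncountable_open_interval "0.prems"(3) by fastforce
  then show ?case using Q qlin_0[OF \<open>qlin f\<close>] by simp
next
  case (Suc n)
  then have neQ: "Q \<noteq> {}" by auto
  define \<mu> where "\<mu> = Min (uq ` Q)"
  have "\<mu> \<in> uq ` Q" unfolding \<mu>_def using Suc.prems(1) neQ by (intro Min_in) auto
  then obtain q0 where q0: "q0 \<in> Q" "uq q0 = \<mu>" by auto
  have minq: "\<And>q. q \<in> Q \<Longrightarrow> uq q0 \<le> uq q" unfolding q0(2) \<mu>_def using Suc.prems(1) by auto
  have lq0: "uq q0 = l"
  proof (rule ccontr)
    assume "uq q0 \<noteq> l"
    then have lt: "l < uq q0" using Suc.prems(4)[OF q0(1)] by auto
    have "{l<..<uq q0} \<subseteq> {l<..<r} - (\<Union>q\<in>Q. {uq q<..<vq q})"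
      using minq Suc.prems(4) q0(1) by fastforce
    then have "countable {l<..<uq q0}" using Suc.prems(6) countable_subset by blast
    then show False using uncountable_open_interval lt by blast
  qed
  define Q' where "Q' = Q - {q0}"
  have cQ': "n = card Q'" unfolding Q'_def using Suc.hyps(2) q0(1) Suc.prems(1) by simp
  have after: "vq q0 \<le> uq q" if q: "q \<in> Q'" for q
  proof (rule ccontr)
    assume "\<not> vq q0 \<le> uq q"
    then have lt: "uq q < vq q0" by simp
    have qq: "q \<in> Q" "q \<noteq> q0" using q unfolding Q'_def by auto
    have "uq q0 \<le> uq q" using minq qq by auto
    define t where "t = (uq q + min (vq q) (vq q0)) / 2"
    have "uq q < vq q" using Suc.prems(4)[OF qq(1)] by auto
    then have "t \<in> {uq q<..<vq q} \<inter> {uq q0<..<vq q0}" unfolding t_def using lt \<open>uq q0 \<le> uq q\<close> by auto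
    then show False using Suc.prems(5)[OF qq(1) q0(1) qq(2)] by blast
  qed
  have IH: "(\<Sum>q\<in>Q'. f (vq q - uq q)) = f (r - vq q0)"
  proof (rule Suc.hyps(1)[OF cQ'])
    show "finite Q'" unfolding Q'_def using Suc.prems(1) by simp
    show "qlin f" by fact
    show "vq q0 \<le> r" using Suc.prems(4)[OF q0(1)] by simp
    show "vq q0 \<le> uq q \<and> uq q < vq q \<and> vq q \<le> r" if "q \<in> Q'" for q
      using after[OF that] Suc.prems(4) that unfolding Q'_def by auto
    show "{uq q<..<vq q} \<inter> {uq q'<..<vq q'} = {}" if "q \<in> Q'" "q' \<in> Q'" "q \<noteq> q'" for q q'
      using Suc.prems(5) that unfolding Q'_def by auto
    have "{vq q0<..<r} - (\<Union>q\<in>Q'. {uq q<..<vq q}) \<subseteq> {l<..<r} - (\<Union>q\<in>Q. {uq q<..<vq q})"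
      using lq0 Suc.prems(4)[OF q0(1)] unfolding Q'_def by auto
    then show "countable ({vq q0<..<r} - (\<Union>q\<in>Q'. {uq q<..<vq q}))"
      using Suc.prems(6) countable_subset by blast
  qed
  have "(\<Sum>q\<in>Q. f (vq q - uq q)) = f (vq q0 - uq q0) + (\<Sum>q\<in>Q'. f (vq q - uq q))"
    unfolding Q'_def using Suc.prems(1) q0(1) by (simp add: sum.remove)
  also have "\<dots> = f (vq q0 - l) + f (r - vq q0)" using IH lq0 by simp
  also have "\<dots> = f (r - l)" using qlin_add[OF \<open>qlin f\<close>, of "vq q0 - l" "r - vq q0"] by simp
  finally show ?case .
qed


locale sys =
  fixes k :: nat and a b c d y :: "nat \<Rightarrow> real" and \<epsilon> :: real
  assumes ops: "op_system k a b c d" and adm: "admissible k y" and eok: "eps_ok k y \<epsilon>"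
begin

abbreviation "Lf \<equiv> Lft k a c"
abbreviation "Rg \<equiv> Rgt k b d"
abbreviation "pt \<equiv> partner k"
abbreviation "ST \<equiv> is_start k a b c d y \<epsilon>"
abbreviation "OB \<equiv> obst k a b c d y"
abbreviation "PS \<equiv> pass_step k a b c d y \<epsilon>"
abbreviation "TH \<equiv> top_hit k a b c d y \<epsilon>"
abbreviation "LS \<equiv> leaf_step k a b c d y \<epsilon>"

definition dl :: "nat \<Rightarrow> real" where "dl j = Lf (pt j) - Lf j"

lemma eps_pos: "\<epsilon> > 0" using eok unfolding eps_ok_def by auto

lemma LR: assumes "j < 2*k" shows "0 \<le> Lf j" "Lf j < Rg j" "Rg j \<le> 1"
  using ops assms unfolding op_system_def Lft_def Rgt_def
  by (auto split: if_splits dest: spec[of _ "j - k"])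

lemma pt_lt: "j < 2*k \<Longrightarrow> pt j < 2*k" unfolding partner_def by auto
lemma pt_pt: "j < 2*k \<Longrightarrow> pt (pt j) = j" unfolding partner_def by auto
lemma pt_inj: "j < 2*k \<Longrightarrow> j' < 2*k \<Longrightarrow> pt j = pt j' \<Longrightarrow> j = j'"
  using pt_pt by metis
lemma len_pt: assumes "j < 2*k" shows "Rg (pt j) - Lf (pt j) = Rg j - Lf j"
proof (cases "j < k")
  case True
  then have "d j - c j = b j - a j" using ops unfolding op_system_def by auto
  then show ?thesis using True unfolding partner_def Lft_def Rgt_def by auto
next
  case False
  then have "d (j - k) - c (j - k) = b (j - k) - a (j - k)" using ops assms unfolding op_system_def by auto
  then show ?thesis using False assms unfolding partner_def Lft_def Rgt_def by auto
qed
lemma dl_pt: "j < 2*k \<Longrightarrow> dl (pt j) = - dl j" unfolding dl_def using pt_pt by simp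

lemma y_bounds: "j < 2*k \<Longrightarrow> 0 < y j \<and> y j < 1 \<and> y j + \<epsilon> < 1"
  using adm eok unfolding admissible_def eps_ok_def by auto
lemma y_inj: "j < 2*k \<Longrightarrow> j' < 2*k \<Longrightarrow> y j = y j' \<Longrightarrow> j = j'"
  using adm unfolding admissible_def inj_on_def by auto
lemma y_sep: "j < 2*k \<Longrightarrow> j' < 2*k \<Longrightarrow> j \<noteq> j' \<Longrightarrow> y j + \<epsilon> < y j' \<or> y j' + \<epsilon> < y j"
  using eok unfolding eps_ok_def by auto

definition hts :: "real set" where "hts = insert 0 ((\<lambda>j. y j + \<epsilon>) ` {..<2*k})"
lemma finite_hts: "finite hts" unfolding hts_def by auto

lemma ST_snd: "ST p \<Longrightarrow> snd p \<in> hts" unfolding is_start_def hts_def by auto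
lemma ST_fst: "ST p \<Longrightarrow> 0 < fst p \<and> fst p < 1" unfolding is_start_def by auto

lemma height_cmp:
  assumes "s = 0 \<or> (\<exists>j3<2*k. s = y j3 + \<epsilon>)" "j < 2*k" "s < y j + \<epsilon>"
  shows "s < y j"
  using assms(1)
proof
  assume "s = 0" then show ?thesis using y_bounds[OF assms(2)] by auto
next
  assume "\<exists>j3<2*k. s = y j3 + \<epsilon>"
  then obtain j3 where j3: "j3 < 2*k" "s = y j3 + \<epsilon>" by auto
  then have "j3 \<noteq> j" using assms(3) by auto
  then show ?thesis using y_sep[OF j3(1) assms(2)] j3 assms(3) eps_pos by auto
qed

lemma below_obst:
  assumes "ST u" "ST u'" "fst u = fst u'" "snd u < snd u'"
  obtains j where "j < 2*k" "snd u' = y j + \<epsilon>" "OB (fst u) (snd u) j"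
proof -
  have "snd u' \<noteq> 0" using assms ST_snd[OF assms(1)] unfolding hts_def using y_bounds eps_pos by force
  then obtain j where j: "j < 2*k" "snd u' = y j + \<epsilon>" "Lf j \<le> fst u'" "fst u' \<le> Rg j"
    using assms(2) unfolding is_start_def by auto
  have "snd u = 0 \<or> (\<exists>j3<2*k. snd u = y j3 + \<epsilon>)" using assms(1) unfolding is_start_def by auto
  then have "snd u < y j" using height_cmp j(1) assms(4) j(2) by auto
  then have "OB (fst u) (snd u) j" using j assms(3) unfolding obst_def by auto
  then show ?thesis using that j by auto
qed

definition lo :: "real \<times> real \<Rightarrow> nat" where
  "lo p = (THE j. OB (fst p) (snd p) j \<and> (\<forall>j'. OB (fst p) (snd p) j' \<longrightarrow> y j \<le> y j'))"

lemma lo_unique: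
  assumes "OB x s j \<and> (\<forall>j'. OB x s j' \<longrightarrow> y j \<le> y j')"
  shows "lo (x, s) = j"
  unfolding lo_def fst_conv snd_conv
proof (rule the_equality)
  show "OB x s j \<and> (\<forall>j'. OB x s j' \<longrightarrow> y j \<le> y j')" by fact
  fix j' assume j': "OB x s j' \<and> (\<forall>j''. OB x s j'' \<longrightarrow> y j' \<le> y j'')"
  then have "y j = y j'" using assms by force
  moreover have "j < 2*k" "j' < 2*k" using assms j' unfolding obst_def by auto
  ultimately show "j' = j" using y_inj by auto
qed

lemma lo_exists:
  assumes "OB x s j0"
  shows "OB x s (lo (x,s)) \<and> (\<forall>j'. OB x s j' \<longrightarrow> y (lo (x,s)) \<le> y j')"
proof -
  have fin: "finite {j. OB x s j}" unfolding obst_def by auto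
  have ne: "{j. OB x s j} \<noteq> {}" using assms by auto
  define M where "M = Min (y ` {j. OB x s j})"
  have "M \<in> y ` {j. OB x s j}" unfolding M_def using fin ne by (intro Min_in) auto
  then obtain j where j0: "j \<in> {j. OB x s j}" "y j = M" by auto
  have "\<forall>j'\<in>{j. OB x s j}. M \<le> y j'" unfolding M_def using fin by auto
  then have j: "j \<in> {j. OB x s j}" "\<forall>j'\<in>{j. OB x s j}. y j \<le> y j'" using j0 by auto
  then have "lo (x,s) = j" by (intro lo_unique) auto
  then show ?thesis using j by auto
qed

lemma PS_iff:
  "PS p q \<longleftrightarrow> ST p \<and> (\<exists>j. OB (fst p) (snd p) j) \<and> Lf (lo p) < fst p \<and> fst p < Rg (lo p)
     \<and> q = (fst p + dl (lo p), y (pt (lo p)) + \<epsilon>)"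
proof
  assume "PS p q"
  then obtain j where j: "ST p" "OB (fst p) (snd p) j" "\<forall>j'. OB (fst p) (snd p) j' \<longrightarrow> y j \<le> y j'"
     "Lf j < fst p" "fst p < Rg j" "q = (fst p + (Lf (pt j) - Lf j), y (pt j) + \<epsilon>)"
    unfolding pass_step_def by blast
  then have "lo p = j" using lo_unique[of "fst p" "snd p" j] by simp
  then show "ST p \<and> (\<exists>j. OB (fst p) (snd p) j) \<and> Lf (lo p) < fst p \<and> fst p < Rg (lo p)
     \<and> q = (fst p + dl (lo p), y (pt (lo p)) + \<epsilon>)" using j unfolding dl_def by auto
next
  assume H: "ST p \<and> (\<exists>j. OB (fst p) (snd p) j) \<and> Lf (lo p) < fst p \<and> fst p < Rg (lo p)
     \<and> q = (fst p + dl (lo p), y (pt (lo p)) + \<epsilon>)"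
  then obtain j0 where "OB (fst p) (snd p) j0" by auto
  from lo_exists[OF this] have "OB (fst p) (snd p) (lo p) \<and> (\<forall>j'. OB (fst p) (snd p) j' \<longrightarrow> y (lo p) \<le> y j')"
    by simp
  then show "PS p q" using H unfolding pass_step_def dl_def by blast
qed

lemma PS_lo: "PS p q \<Longrightarrow> lo p < 2*k"
  using PS_iff lo_exists[of "fst p" "snd p"] unfolding obst_def by (metis prod.collapse)

lemma PS_det: "PS p q \<Longrightarrow> PS p q' \<Longrightarrow> q = q'" using PS_iff by simp

lemma PS_ST: "PS p q \<Longrightarrow> ST p" using PS_iff by simp

lemma PS_fst: "PS p q \<Longrightarrow> fst q = fst p + dl (lo p)" using PS_iff by simp

lemma PS_target: assumes "PS p q"
  shows "snd q = y (pt (lo p)) + \<epsilon>" "Lf (pt (lo p)) < fst q" "fst q < Rg (pt (lo p))" "pt (lo p) < 2*k"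
    "snd q > 0" "ST q"
proof -
  have j: "lo p < 2*k" using PS_lo[OF assms] .
  have len: "Rg (pt (lo p)) - Lf (pt (lo p)) = Rg (lo p) - Lf (lo p)" using len_pt[OF j] .
  show "snd q = y (pt (lo p)) + \<epsilon>" "Lf (pt (lo p)) < fst q" "fst q < Rg (pt (lo p))" "pt (lo p) < 2*k"
    using assms len j pt_lt unfolding PS_iff dl_def by auto
  then show "snd q > 0" using y_bounds eps_pos by (metis add_pos_pos)
  show "ST q" unfolding is_start_def
    using \<open>snd q = _\<close> \<open>Lf (pt (lo p)) < fst q\<close> \<open>fst q < Rg (pt (lo p))\<close> \<open>pt (lo p) < 2*k\<close>
      LR[OF \<open>pt (lo p) < 2*k\<close>] by force
qed

lemma PS_TH_excl: "PS p q \<Longrightarrow> \<not> TH p" unfolding top_hit_def PS_iff by auto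

lemma TH_ST: "TH p \<Longrightarrow> ST p" unfolding top_hit_def by auto

lemma same_lo:
  assumes "ST u" "ST u'" "fst u = fst u'" "OB (fst u) (snd u) j0" "OB (fst u') (snd u') j1" "lo u = lo u'"
  shows "snd u = snd u'"
proof (rule ccontr)
  assume ne: "snd u \<noteq> snd u'"
  have main: "False" if A: "ST v" "ST v'" "fst v = fst v'" "snd v < snd v'" "OB (fst v) (snd v) i0"
      "OB (fst v') (snd v') i1" "lo v = lo v'" for v v' i0 i1
  proof -
    obtain j where j: "j < 2*k" "snd v' = y j + \<epsilon>" "OB (fst v) (snd v) j"
      using below_obst[OF A(1-4)] by blast
    have l1: "OB (fst v) (snd v) (lo v) \<and> (\<forall>j'. OB (fst v) (snd v) j' \<longrightarrow> y (lo v) \<le> y j')"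
      using lo_exists[OF A(5)] by simp
    have l2: "OB (fst v') (snd v') (lo v')" using lo_exists[OF A(6)] by simp
    have "y (lo v) \<le> y j" using l1 j by auto
    moreover have "snd v' < y (lo v')" using l2 unfolding obst_def by auto
    ultimately show False using j(2) A(7) eps_pos by auto
  qed
  show False
  proof (cases "snd u < snd u'")
    case True then show ?thesis using main[OF assms(1,2,3) True assms(4,5,6)] by blast
  next
    case False then have "snd u' < snd u" using ne by auto
    then show ?thesis using main[OF assms(2,1) assms(3)[symmetric] _ assms(5,4) assms(6)[symmetric]] by auto
  qed
qed

lemma PS_pred_unique: assumes "PS u q" "PS u' q" shows "u = u'"
proof -
  have j: "lo u < 2*k" "lo u' < 2*k" using PS_lo assms by auto
  have "y (pt (lo u)) = y (pt (lo u'))" using PS_target(1)[OF assms(1)] PS_target(1)[OF assms(2)] by simp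
  then have "pt (lo u) = pt (lo u')" using y_inj pt_lt j by blast
  then have l: "lo u = lo u'" using pt_inj j by blast
  have f: "fst u = fst u'" using PS_fst[OF assms(1)] PS_fst[OF assms(2)] l by simp
  have "snd u = snd u'"
    using assms l f same_lo[of u u'] PS_ST unfolding PS_iff by metis
  then show ?thesis using f by (simp add: prod_eq_iff)
qed

lemma TH_unique: assumes "TH u" "TH u'" "fst u = fst u'" shows "u = u'"
proof -
  have "snd u = snd u'"
  proof (rule ccontr)
    assume "snd u \<noteq> snd u'"
    then consider "snd u < snd u'" | "snd u' < snd u" by linarith
    then show False
    proof cases
      case 1 then show False using below_obst[OF TH_ST[OF assms(1)] TH_ST[OF assms(2)] assms(3) 1] assms(1)
        unfolding top_hit_def by metis
    next
      case 2 then show False using below_obst[OF TH_ST[OF assms(2)] TH_ST[OF assms(1)] assms(3)[symmetric] 2] assms(2)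
        unfolding top_hit_def by metis
    qed
  qed
  then show ?thesis using assms(3) by (simp add: prod_eq_iff)
qed

lemma LS_iff: "LS p q \<longleftrightarrow> PS p q \<or> (TH p \<and> q = (fst p, 0))" unfolding leaf_step_def by simp

lemma LS_det: "LS p q \<Longrightarrow> LS p q' \<Longrightarrow> q = q'"
  unfolding LS_iff using PS_det PS_TH_excl by blast

lemma LS_pred: "LS u q \<Longrightarrow> LS u' q \<Longrightarrow> u = u'"
  unfolding LS_iff
  using PS_pred_unique TH_unique PS_target(5) by (metis fst_conv less_irrefl snd_conv)

end

context sys begin

definition nxt :: "real \<times> real \<Rightarrow> real \<times> real" where "nxt p = (THE q. PS p q)"
definition orb :: "real \<Rightarrow> nat \<Rightarrow> real \<times> real" where "orb x r = (nxt ^^ r) (x, 0)"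
definition valid :: "real \<Rightarrow> nat \<Rightarrow> bool" where
  "valid x n \<longleftrightarrow> (\<forall>r<n. PS (orb x r) (orb x (Suc r)))"
definition good :: "real \<Rightarrow> nat \<Rightarrow> bool" where "good x n \<longleftrightarrow> valid x n \<and> TH (orb x n)"

lemma nxt_eq: "PS p q \<Longrightarrow> nxt p = q"
  unfolding nxt_def using PS_det by (intro the_equality) auto

lemma orb_0[simp]: "orb x 0 = (x, 0)" unfolding orb_def by simp
lemma orb_Suc: "orb x (Suc r) = nxt (orb x r)" unfolding orb_def by simp

lemma valid_mono: "valid x n \<Longrightarrow> m \<le> n \<Longrightarrow> valid x m" unfolding valid_def by auto
lemma valid_Suc: "valid x (Suc n) \<longleftrightarrow> valid x n \<and> PS (orb x n) (orb x (Suc n))"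
  unfolding valid_def by (auto simp: less_Suc_eq)
lemma valid_SucI: "valid x n \<Longrightarrow> PS (orb x n) q \<Longrightarrow> valid x (Suc n)"
  using valid_Suc orb_Suc nxt_eq by metis

lemma PS_rtrancl_orb:
  assumes "PS\<^sup>*\<^sup>* (x, 0) p" shows "\<exists>r. valid x r \<and> orb x r = p"
  using assms
proof (induction rule: rtranclp_induct)
  case base then show ?case by (intro exI[of _ 0]) (auto simp: valid_def)
next
  case (step q p)
  then obtain r where r: "valid x r" "orb x r = q" by auto
  then have "valid x (Suc r)" "orb x (Suc r) = p" using step valid_SucI orb_Suc nxt_eq by auto
  then show ?case by blast
qed

lemma orb_rtrancl: "valid x r \<Longrightarrow> PS\<^sup>*\<^sup>* (x, 0) (orb x r)"
proof (induction r)
  case 0 then show ?case by simp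
next
  case (Suc r) then show ?case using valid_Suc
    by (metis (no_types, lifting) rtranclp.rtrancl_into_rtrancl valid_mono le_SucI order_refl)
qed

lemma orb_snd_pos: "valid x r \<Longrightarrow> r > 0 \<Longrightarrow> snd (orb x r) > 0"
  by (cases r) (auto simp: valid_Suc intro: PS_target(5))

lemma chain_inj:
  assumes "valid x r" "valid x' r'" "orb x r = orb x' r'"
  shows "x = x' \<and> r = r'"
  using assms
proof (induction r arbitrary: r')
  case 0
  show ?case
  proof (cases r')
    case 0 then show ?thesis using "0.prems" by simp
  next
    case (Suc r0)
    then have "snd (orb x' r') > 0" using orb_snd_pos "0.prems" by auto
    then show ?thesis using "0.prems" by (metis orb_0 snd_conv less_irrefl)
  qed
next
  case (Suc r)
  show ?case
  proof (cases r')
    case 0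
    have "snd (orb x (Suc r)) > 0" using orb_snd_pos[of x "Suc r"] Suc.prems by blast
    then show ?thesis using Suc.prems 0 by (metis orb_0 snd_conv less_irrefl)
  next
    case (Suc r0)
    have p1: "PS (orb x r) (orb x (Suc r))" using \<open>valid x (Suc r)\<close> valid_Suc by blast
    have p2: "PS (orb x' r0) (orb x' (Suc r0))" using \<open>valid x' r'\<close> Suc valid_Suc by blast
    have "orb x r = orb x' r0" using PS_pred_unique p1 p2 \<open>orb x (Suc r) = orb x' r'\<close> Suc by metis
    then have "x = x' \<and> r = r0"
      using Suc.IH[of r0] \<open>valid x (Suc r)\<close> \<open>valid x' r'\<close> Suc valid_mono by (metis le_SucI order_refl)
    then show ?thesis using Suc by simp
  qed
qed

lemma good_unique: "good x n \<Longrightarrow> good x n' \<Longrightarrow> n = n'"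
proof -
  have *: False if "good x n" "good x n'" "n < n'" for n n'
  proof -
    have "PS (orb x n) (orb x (Suc n))" using that unfolding good_def valid_def by auto
    then show False using that PS_TH_excl unfolding good_def by blast
  qed
  show "good x n \<Longrightarrow> good x n' \<Longrightarrow> n = n'" using *[of n n'] *[of n' n] by (meson linorder_neqE_nat)
qed

lemma good_valid_le: "good x n \<Longrightarrow> valid x n' \<Longrightarrow> n' \<le> n"
proof (rule ccontr)
  assume "good x n" "valid x n'" "\<not> n' \<le> n"
  then have "PS (orb x n) (orb x (Suc n))" unfolding valid_def by auto
  then show False using \<open>good x n\<close> PS_TH_excl unfolding good_def by blast
qed

definition nr :: "real \<Rightarrow> nat" where "nr x = (THE n. good x n)"
lemma nr_eq: "good x n \<Longrightarrow> nr x = n" unfolding nr_def using good_unique by blast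

lemma orb_fst: "valid x r \<Longrightarrow> fst (orb x r) = x + (\<Sum>i<r. dl (lo (orb x i)))"
proof (induction r)
  case 0 then show ?case by simp
next
  case (Suc r)
  then have "PS (orb x r) (orb x (Suc r))" "valid x r" using valid_Suc by auto
  then show ?case using Suc.IH PS_fst by simp
qed

lemma valid_ST: assumes "valid x r" "0 < x" "x < 1" shows "ST (orb x r)"
proof (cases r)
  case 0 then show ?thesis using assms by (auto simp: is_start_def)
next
  case (Suc r0) then show ?thesis using assms PS_target(6) valid_Suc by blast
qed

definition Crit :: "real set" where "Crit = Lf ` {..<2*k} \<union> Rg ` {..<2*k}"
lemma finite_Crit: "finite Crit" unfolding Crit_def by auto

definition same_cell :: "real \<Rightarrow> real \<Rightarrow> bool" where
  "same_cell u u' \<longleftrightarrow> (\<forall>c\<in>Crit. (c < u \<longleftrightarrow> c < u') \<and> (u < c \<longleftrightarrow> u' < c))"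

lemma same_cell_LR:
  assumes "same_cell u u'" "j < 2*k"
  shows "(Lf j \<le> u \<longleftrightarrow> Lf j \<le> u') \<and> (u \<le> Rg j \<longleftrightarrow> u' \<le> Rg j) \<and>
         (Lf j < u \<longleftrightarrow> Lf j < u') \<and> (u < Rg j \<longleftrightarrow> u' < Rg j)"
proof -
  have "Lf j \<in> Crit" "Rg j \<in> Crit" using assms(2) unfolding Crit_def by auto
  then show ?thesis using assms(1) unfolding same_cell_def by (meson not_less)
qed

lemma same_cell_OB: "same_cell u u' \<Longrightarrow> OB u s j \<longleftrightarrow> OB u' s j"
  unfolding obst_def using same_cell_LR by blast

lemma same_cell_lo: "same_cell u u' \<Longrightarrow> lo (u, s) = lo (u', s)"
  unfolding lo_def fst_conv snd_conv using same_cell_OB by presburger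

lemma same_cell_ST: "same_cell u u' \<Longrightarrow> 0 < u' \<Longrightarrow> u' < 1 \<Longrightarrow> ST (u, s) \<Longrightarrow> ST (u', s)"
  unfolding is_start_def using same_cell_LR by auto

lemma same_cell_PS:
  assumes "same_cell u u'" "0 < u'" "u' < 1" "PS (u, s) q"
  shows "PS (u', s) (fst q + (u' - u), snd q)"
proof -
  have lo: "lo (u', s) = lo (u, s)" using same_cell_lo assms(1) by simp
  have j: "lo (u,s) < 2*k" using PS_lo[OF assms(4)] .
  have "ST (u', s)" using same_cell_ST assms PS_ST by blast
  moreover have "\<exists>j. OB u' s j" using assms(4) same_cell_OB[OF assms(1)] unfolding PS_iff by auto
  moreover have "Lf (lo (u', s)) < u' \<and> u' < Rg (lo (u', s))"
    using assms(4) same_cell_LR[OF assms(1) j] lo unfolding PS_iff by auto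
  moreover have "(fst q + (u' - u), snd q) = (u' + dl (lo (u',s)), y (pt (lo (u',s))) + \<epsilon>)"
    using assms(4) lo unfolding PS_iff by auto
  ultimately show ?thesis unfolding PS_iff by simp
qed

lemma same_cell_TH:
  assumes "same_cell u u'" "0 < u'" "u' < 1" "TH (u, s)"
  shows "TH (u', s)"
  using assms same_cell_ST same_cell_OB unfolding top_hit_def by auto

lemma shift_orbit:
  assumes x: "0 < x'" "x' < 1" and v: "valid x n"
    and sc: "\<forall>r\<le>n. same_cell (fst (orb x r)) (fst (orb x r) + (x' - x))"
  shows "valid x' n \<and> (\<forall>r\<le>n. orb x' r = (fst (orb x r) + (x' - x), snd (orb x r)))"
  using v sc
proof (induction n)
  case 0 then show ?case by (simp add: valid_def)
next
  case (Suc n)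
  then have IH: "valid x' n" "\<forall>r\<le>n. orb x' r = (fst (orb x r) + (x' - x), snd (orb x r))"
    using valid_mono by auto
  have ps: "PS (orb x n) (orb x (Suc n))" using Suc.prems valid_Suc by auto
  have scn: "same_cell (fst (orb x n)) (fst (orb x n) + (x' - x))" using Suc.prems by auto
  have in01: "0 < fst (orb x n) + (x' - x) \<and> fst (orb x n) + (x' - x) < 1"
    using IH valid_ST[OF IH(1) x] ST_fst by (metis fst_conv order_refl)
  have "PS (fst (orb x n) + (x' - x), snd (orb x n)) (fst (orb x (Suc n)) + (x' - x), snd (orb x (Suc n)))"
    using same_cell_PS[OF scn _ _ , of "snd (orb x n)" "orb x (Suc n)"] ps in01 by simp
  then have ps': "PS (orb x' n) (fst (orb x (Suc n)) + (x' - x), snd (orb x (Suc n)))" using IH by simp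
  then have "orb x' (Suc n) = (fst (orb x (Suc n)) + (x' - x), snd (orb x (Suc n)))"
    using orb_Suc nxt_eq by simp
  then show ?case using IH ps' valid_SucI by (auto simp: le_Suc_eq)
qed

end

lemma sym_rtranclp_cases:
  assumes fd: "\<And>u v v'. R u v \<Longrightarrow> R u v' \<Longrightarrow> v = v'"
    and bd: "\<And>u u' v. R u v \<Longrightarrow> R u' v \<Longrightarrow> u = u'"
    and h: "(\<lambda>u v. R u v \<or> R v u)\<^sup>*\<^sup>* p q"
  shows "R\<^sup>*\<^sup>* p q \<or> R\<^sup>*\<^sup>* q p"
  using h
proof (induction rule: rtranclp_induct)
  case base then show ?case by simp
next
  case (step w v)
  from step.IH show ?case
  proof
    assume pw: "R\<^sup>*\<^sup>* p w"
    from step.hyps(2) show ?thesis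
    proof
      assume "R w v" then show ?thesis using pw by auto
    next
      assume vw: "R v w"
      show ?thesis
      proof (cases "p = w")
        case True then show ?thesis using vw by auto
      next
        case False
        then obtain w' where "R\<^sup>*\<^sup>* p w'" "R w' w" using pw by (metis rtranclp.cases)
        then show ?thesis using bd[OF vw] by auto
      qed
    qed
  next
    assume wp: "R\<^sup>*\<^sup>* w p"
    from step.hyps(2) show ?thesis
    proof
      assume wv: "R w v"
      show ?thesis
      proof (cases "w = p")
        case True then show ?thesis using wv by auto
      next
        case False
        then obtain w'' where "R w w''" "R\<^sup>*\<^sup>* w'' p" using wp by (metis converse_rtranclpE)
        then show ?thesis using fd[OF wv] by auto
      qed
    next
      assume "R v w" then show ?thesis using wp by (meson converse_rtranclp_into_rtranclp)
    qed
  qed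
qed

context sys begin

lemma start_below:
  assumes j: "j < 2*k" and z: "Lf j < z" "z < Rg j"
  shows "\<exists>h. PS (z, h) (z + dl j, y (pt j) + \<epsilon>) \<and> lo (z, h) = j"
proof -
  have z01: "0 < z" "z < 1" using LR[OF j] z by auto
  define S where "S = {h. ST (z, h) \<and> h < y j}"
  have finS: "finite S" using finite_hts ST_snd unfolding S_def by (metis (no_types, lifting) finite_subset mem_Collect_eq snd_conv subsetI)
  have "0 \<in> S" unfolding S_def is_start_def using z01 y_bounds[OF j] by auto
  then have neS: "S \<noteq> {}" by auto
  define h where "h = Max S"
  have hS: "h \<in> S" unfolding h_def using finS neS by (rule Max_in)
  have hmax: "\<And>h'. h' \<in> S \<Longrightarrow> h' \<le> h" unfolding h_def using finS by auto
  have ob: "OB z h j" using hS j z unfolding S_def obst_def by auto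
  have low: "\<forall>j'. OB z h j' \<longrightarrow> y j \<le> y j'"
  proof (intro allI impI)
    fix j' assume o: "OB z h j'"
    show "y j \<le> y j'"
    proof (rule ccontr)
      assume "\<not> y j \<le> y j'"
      then have lt: "y j' < y j" by simp
      have j': "j' < 2*k" "Lf j' \<le> z" "z \<le> Rg j'" "h < y j'" using o unfolding obst_def by auto
      have "j' \<noteq> j" using lt by auto
      then have "y j' + \<epsilon> < y j" using y_sep[OF j'(1) j] lt by auto
      then have "y j' + \<epsilon> \<in> S" unfolding S_def is_start_def using j' z01 by auto
      then show False using hmax j'(4) eps_pos by fastforce
    qed
  qed
  have lo: "lo (z, h) = j" using lo_unique ob low by blast
  have "PS (z, h) (z + dl j, y (pt j) + \<epsilon>)"
    unfolding PS_iff using lo ob z hS unfolding S_def by auto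
  then show ?thesis using lo by blast
qed

lemma back_to_gamma:
  assumes "LS\<^sup>*\<^sup>* (x', 0) p" "ST p"
  shows "\<exists>x''. 0 < x'' \<and> x'' < 1 \<and> PS\<^sup>*\<^sup>* (x'', 0) p"
  using assms
proof (induction rule: rtranclp_induct)
  case base then show ?case using ST_fst by force
next
  case (step w v)
  from step.hyps(2) show ?case unfolding LS_iff
  proof
    assume ps: "PS w v"
    then obtain x'' where "0 < x''" "x'' < 1" "PS\<^sup>*\<^sup>* (x'', 0) w" using step.IH PS_ST by blast
    then show ?thesis using ps by (meson rtranclp.rtrancl_into_rtrancl)
  next
    assume "TH w \<and> v = (fst w, 0)"
    then show ?thesis using ST_fst TH_ST by (intro exI[of _ "fst w"]) auto
  qed
qed

lemma fwd_to_TH: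
  assumes "LS\<^sup>*\<^sup>* p q" "snd q = 0" "snd p \<noteq> 0"
  shows "\<exists>p5. PS\<^sup>*\<^sup>* p p5 \<and> TH p5"
  using assms
proof (induction rule: converse_rtranclp_induct)
  case base then show ?case by simp
next
  case (step u w)
  from step.hyps(1) show ?case unfolding LS_iff
  proof
    assume ps: "PS u w"
    then have "snd w \<noteq> 0" using PS_target(5)[OF ps] by simp
    then obtain p5 where "PS\<^sup>*\<^sup>* w p5" "TH p5" using step.IH step.prems by blast
    then show ?thesis using ps by (meson converse_rtranclp_into_rtranclp)
  next
    assume "TH u \<and> w = (fst u, 0)" then show ?thesis by blast
  qed
qed

lemma PS_rtrancl_into_orbit:
  assumes "PS\<^sup>*\<^sup>* p w"
  shows "valid x n \<Longrightarrow> orb x n = w \<Longrightarrow> \<exists>r\<le>n. orb x r = p"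
  using assms
proof (induction arbitrary: n rule: rtranclp_induct)
  case base then show ?case by blast
next
  case (step w v)
  show ?case
  proof (cases n)
    case 0
    then show ?thesis using step PS_target(5)[OF step.hyps(2)] by (metis orb_0 snd_conv less_irrefl)
  next
    case (Suc n0)
    then have "PS (orb x n0) (orb x n)" "valid x n0" using step.prems valid_Suc by auto
    then have "orb x n0 = w" using PS_pred_unique step.hyps(2) step.prems(2) by metis
    then obtain r where "r \<le> n0" "orb x r = p" using step.IH \<open>valid x n0\<close> by blast
    then show ?thesis using Suc by (intro exI[of _ r]) auto
  qed
qed

lemma PS_rtrancl_funpow:
  assumes "PS\<^sup>*\<^sup>* p w"
  shows "\<exists>r. (nxt ^^ r) p = w \<and> (\<forall>i<r. PS ((nxt ^^ i) p) ((nxt ^^ Suc i) p))"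
  using assms
proof (induction rule: rtranclp_induct)
  case base then show ?case by (intro exI[of _ 0]) auto
next
  case (step w v)
  then obtain r where r: "(nxt ^^ r) p = w" "\<forall>i<r. PS ((nxt ^^ i) p) ((nxt ^^ Suc i) p)" by blast
  have "(nxt ^^ Suc r) p = v" using r(1) step.hyps(2) nxt_eq by simp
  moreover have "\<forall>i<Suc r. PS ((nxt ^^ i) p) ((nxt ^^ Suc i) p)"
    using r step.hyps(2) calculation by (auto simp: less_Suc_eq)
  ultimately show ?case by blast
qed

lemma funpow_chain_inj:
  assumes "\<forall>i<r. PS ((nxt ^^ i) p) ((nxt ^^ Suc i) p)" "\<forall>i<r. PS ((nxt ^^ i) p') ((nxt ^^ Suc i) p')"
    "(nxt ^^ r) p = (nxt ^^ r) p'"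
  shows "p = p'"
  using assms
proof (induction r arbitrary: p p')
  case 0 then show ?case by simp
next
  case (Suc r)
  have "(nxt ^^ r) (nxt p) = (nxt ^^ r) (nxt p')" using Suc.prems(3) by (simp add: funpow_Suc_right del: funpow.simps)
  moreover have "\<forall>i<r. PS ((nxt ^^ i) (nxt p)) ((nxt ^^ Suc i) (nxt p))"
    using Suc.prems(1) by (auto simp: funpow_Suc_right simp del: funpow.simps)
  moreover have "\<forall>i<r. PS ((nxt ^^ i) (nxt p')) ((nxt ^^ Suc i) (nxt p'))"
    using Suc.prems(2) by (auto simp: funpow_Suc_right simp del: funpow.simps)
  ultimately have "nxt p = nxt p'" using Suc.IH by blast
  moreover have "PS p (nxt p)" "PS p' (nxt p')" using Suc.prems(1,2) by auto
  ultimately show ?case using PS_pred_unique by metis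
qed

lemma countable_preds: "countable {p. PS\<^sup>*\<^sup>* p w}"
proof -
  define F where "F p = (LEAST r. (nxt ^^ r) p = w \<and> (\<forall>i<r. PS ((nxt ^^ i) p) ((nxt ^^ Suc i) p)))" for p
  have F: "(nxt ^^ F p) p = w \<and> (\<forall>i<F p. PS ((nxt ^^ i) p) ((nxt ^^ Suc i) p))" if "PS\<^sup>*\<^sup>* p w" for p
    unfolding F_def using PS_rtrancl_funpow[OF that] by (rule LeastI_ex)
  have "inj_on F {p. PS\<^sup>*\<^sup>* p w}"
  proof (rule inj_onI)
    fix p p' assume "p \<in> {p. PS\<^sup>*\<^sup>* p w}" "p' \<in> {p. PS\<^sup>*\<^sup>* p w}" "F p = F p'"
    then show "p = p'" using F[of p] F[of p'] funpow_chain_inj[of "F p" p p'] by auto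
  qed
  then show ?thesis by (rule countableI)
qed

end

locale full = sys +
  fixes m :: nat and \<rho> :: "nat \<Rightarrow> nat" and lam :: "nat \<Rightarrow> real" and F :: "real set"
  assumes D: "iet_data m \<rho> lam" and finF: "finite F"
    and FR: "\<forall>x\<in>{0<..<1} - F. first_return k a b c d y \<epsilon> x (iet_map m \<rho> lam x)"
    and fl: "fills k a b c d y \<epsilon>"
begin

abbreviation "T \<equiv> iet_map m \<rho> lam"

lemma pos: "\<forall>i\<in>{1..m}. 0 < lam i" using D unfolding iet_data_def by auto

lemma G1: assumes "x \<in> {0<..<1} - F"
  shows "good x (nr x) \<and> fst (orb x (nr x)) = T x"
proof -
  obtain s where s: "PS\<^sup>*\<^sup>* (x, 0) (T x, s)" "TH (T x, s)"
    using FR assms unfolding first_return_def by blast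
  obtain r where r: "valid x r" "orb x r = (T x, s)" using PS_rtrancl_orb[OF s(1)] by blast
  then have "good x r" using s(2) unfolding good_def by simp
  then show ?thesis using nr_eq r by simp
qed

definition CritOrig :: "real set" where
  "CritOrig = {x \<in> {0<..<1} - F. \<exists>r\<le>nr x. fst (orb x r) \<in> Crit}"

lemma finite_CritOrig: "finite CritOrig"
proof -
  define R where "R x = (SOME r. r \<le> nr x \<and> fst (orb x r) \<in> Crit)" for x
  have R: "R x \<le> nr x \<and> fst (orb x (R x)) \<in> Crit" if "x \<in> CritOrig" for x
    using that unfolding CritOrig_def R_def by (metis (mono_tags, lifting) mem_Collect_eq someI_ex)
  define \<phi> where "\<phi> x = orb x (R x)" for x
  have vR: "valid x (R x)" if "x \<in> CritOrig" for x
    using G1 R[OF that] that valid_mono unfolding CritOrig_def good_def by blast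
  have "inj_on \<phi> CritOrig"
  proof (rule inj_onI)
    fix x x' assume "x \<in> CritOrig" "x' \<in> CritOrig" "\<phi> x = \<phi> x'"
    then show "x = x'" using chain_inj[OF vR vR] unfolding \<phi>_def by blast
  qed
  moreover have "\<phi> ` CritOrig \<subseteq> Crit \<times> hts"
  proof
    fix p assume "p \<in> \<phi> ` CritOrig"
    then obtain x where x: "x \<in> CritOrig" "p = \<phi> x" by auto
    then have "ST p" using valid_ST[OF vR[OF x(1)]] unfolding \<phi>_def CritOrig_def by auto
    then show "p \<in> Crit \<times> hts" using R[OF x(1)] ST_snd x unfolding \<phi>_def by (simp add: mem_Times_iff)
  qed
  ultimately show ?thesis using inj_on_finite finite_Crit finite_hts by blast
qed

definition Brk :: "real set" where "Brk = xpt lam ` {0..m}"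

definition D0 :: "real set" where "D0 = (F \<inter> {0..1}) \<union> CritOrig \<union> Brk \<union> {0, 1}"

lemma finite_D0: "finite D0" unfolding D0_def Brk_def using finF finite_CritOrig by auto

lemma Brk_01: "xpt lam i \<in> {0..1}" if "i \<le> m" for i
  using xpt_mono[OF pos, of 0 i] xpt_mono[OF pos, of i m] iet_basic(2)[OF D] that by auto

lemma D0_01: "D0 \<subseteq> {0..1}" unfolding D0_def CritOrig_def Brk_def using Brk_01 by auto

lemma notD0: "x \<in> {0<..<1} - D0 \<Longrightarrow> x \<in> {0<..<1} - F \<and> x \<notin> CritOrig" unfolding D0_def by auto

definition Pcs :: "(real \<times> real) set" where
  "Pcs = {(u, v). u \<in> D0 \<and> v \<in> D0 \<and> u < v \<and> {u<..<v} \<inter> D0 = {}}"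

lemma finite_Pcs: "finite Pcs"
proof -
  have "Pcs \<subseteq> D0 \<times> D0" unfolding Pcs_def by auto
  then show ?thesis using finite_D0 finite_subset by blast
qed

lemma Pcs_props: assumes "P \<in> Pcs"
  shows "fst P \<in> D0" "snd P \<in> D0" "fst P < snd P" "{fst P<..<snd P} \<inter> D0 = {}" "{fst P<..<snd P} \<subseteq> {0<..<1} - D0"
  using assms D0_01 unfolding Pcs_def by force+

lemma Pcs_disj: assumes "P \<in> Pcs" "P' \<in> Pcs" "z \<in> {fst P<..<snd P}" "z \<in> {fst P'<..<snd P'}" shows "P = P'"
proof -
  note A = Pcs_props[OF assms(1)] and B = Pcs_props[OF assms(2)]
  have "fst P = fst P'"
  proof (rule ccontr)
    assume "fst P \<noteq> fst P'"
    then consider "fst P < fst P'" | "fst P' < fst P" by linarith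
    then show False
    proof cases
      case 1 then have "fst P' \<in> {fst P<..<snd P}" using assms by auto
      then show False using A(4) B(1) by blast
    next
      case 2 then have "fst P \<in> {fst P'<..<snd P'}" using assms by auto
      then show False using B(4) A(1) by blast
    qed
  qed
  moreover have "snd P = snd P'"
  proof (rule ccontr)
    assume "snd P \<noteq> snd P'"
    then consider "snd P < snd P'" | "snd P' < snd P" by linarith
    then show False
    proof cases
      case 1 then have "snd P \<in> {fst P'<..<snd P'}" using assms by auto
      then show False using A(2) B(4) by blast
    next
      case 2 then have "snd P' \<in> {fst P<..<snd P}" using assms by auto
      then show False using B(2) A(4) by blast
    qed
  qed
  ultimately show ?thesis by (simp add: prod_eq_iff)
qed

lemma Pcs_cover: assumes "z \<in> {0<..<1} - D0" shows "\<exists>P\<in>Pcs. z \<in> {fst P<..<snd P}"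
proof -
  define L where "L = {d\<in>D0. d < z}"
  define U where "U = {d\<in>D0. z < d}"
  have fin: "finite L" "finite U" unfolding L_def U_def using finite_D0 by auto
  have ne: "0 \<in> L" "1 \<in> U" using assms unfolding L_def U_def D0_def by auto
  define u where "u = Max L"
  define v where "v = Min U"
  have u: "u \<in> L" "\<And>d. d \<in> L \<Longrightarrow> d \<le> u" unfolding u_def using fin ne by (auto intro: Max_in)
  have v: "v \<in> U" "\<And>d. d \<in> U \<Longrightarrow> v \<le> d" unfolding v_def using fin ne by (auto intro: Min_in)
  have "{u<..<v} \<inter> D0 = {}"
  proof (rule ccontr)
    assume "{u<..<v} \<inter> D0 \<noteq> {}"
    then obtain d where d: "d \<in> D0" "u < d" "d < v" by auto
    have "d \<noteq> z" using d assms by auto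
    then consider "d < z" | "z < d" by linarith
    then show False
    proof cases
      case 1 then show False using u(2)[of d] d unfolding L_def by auto
    next
      case 2 then show False using v(2)[of d] d unfolding U_def by auto
    qed
  qed
  then have "(u, v) \<in> Pcs" using u v unfolding Pcs_def L_def U_def by auto
  moreover have "z \<in> {u<..<v}" using u v unfolding L_def U_def by auto
  ultimately show ?thesis by force
qed

definition itin :: "real \<Rightarrow> nat \<times> (nat \<Rightarrow> nat)" where
  "itin x = (nr x, \<lambda>r. if r < nr x then lo (orb x r) else 0)"

lemma same_cell_near:
  assumes "\<forall>c\<in>Crit. \<bar>h\<bar> < \<bar>u - c\<bar>" shows "same_cell u (u + h)"
  unfolding same_cell_def
proof
  fix c assume "c \<in> Crit"
  then have "\<bar>h\<bar> < \<bar>u - c\<bar>" using assms by auto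
  then show "(c < u \<longleftrightarrow> c < u + h) \<and> (u < c \<longleftrightarrow> u + h < c)" by linarith
qed

lemma local_const:
  assumes x: "x \<in> {0<..<1} - D0"
  shows "\<exists>\<eta>>0. \<forall>x'. 0 < x' \<and> x' < 1 \<and> \<bar>x' - x\<bar> < \<eta> \<longrightarrow> itin x' = itin x"
proof -
  have xF: "x \<in> {0<..<1} - F" and xC: "x \<notin> CritOrig" using notD0[OF x] by auto
  define n where "n = nr x"
  have g: "good x n" using G1[OF xF] unfolding n_def by simp
  have nc: "\<forall>r\<le>n. fst (orb x r) \<notin> Crit" using xC xF unfolding CritOrig_def n_def by auto
  define E where "E = {\<bar>fst (orb x r) - c\<bar> | r c. r \<le> n \<and> c \<in> Crit}"
  have finE: "finite E"
  proof -
    have "E = (\<lambda>(r, c). \<bar>fst (orb x r) - c\<bar>) ` ({..n} \<times> Crit)" unfolding E_def by auto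
    then show ?thesis using finite_Crit by simp
  qed
  define \<eta> where "\<eta> = Min (insert 1 E)"
  have Epos: "\<forall>e\<in>E. e > 0" unfolding E_def using nc by fastforce
  have eta_pos: "\<eta> > 0" unfolding \<eta>_def using finE Epos by auto
  have eta_le: "\<And>r c. r \<le> n \<Longrightarrow> c \<in> Crit \<Longrightarrow> \<eta> \<le> \<bar>fst (orb x r) - c\<bar>"
    unfolding \<eta>_def E_def using finE E_def by (intro Min_le) auto
  have "itin x' = itin x" if x': "0 < x'" "x' < 1" "\<bar>x' - x\<bar> < \<eta>" for x'
  proof -
    have sc: "\<forall>r\<le>n. same_cell (fst (orb x r)) (fst (orb x r) + (x' - x))"
      using eta_le x'(3) by (intro allI impI same_cell_near) fastforce
    have vx: "valid x n" using g unfolding good_def by simp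
    from shift_orbit[OF x'(1,2) vx sc]
    have v': "valid x' n" and o': "\<forall>r\<le>n. orb x' r = (fst (orb x r) + (x' - x), snd (orb x r))" by auto
    have "ST (orb x' n)" using valid_ST[OF v' x'(1,2)] .
    then have in01: "0 < fst (orb x r) + (x' - x) \<and> fst (orb x r) + (x' - x) < 1" if "r \<le> n" for r
      using valid_ST[OF valid_mono[OF v' that] x'(1,2)] o' that ST_fst by (metis fst_conv)
    have th: "TH (orb x n)" using g unfolding good_def by simp
    have "TH (fst (orb x n) + (x' - x), snd (orb x n))"
      using same_cell_TH[of "fst (orb x n)" "fst (orb x n) + (x' - x)" "snd (orb x n)"] sc in01[of n] th by simp
    then have "good x' n" using v' o' unfolding good_def by simp
    then have nx': "nr x' = n" using nr_eq by simp
    have "lo (orb x' r) = lo (orb x r)" if "r \<le> n" for r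
      using o' that same_cell_lo sc by (metis prod.collapse)
    then show ?thesis unfolding itin_def nx' n_def[symmetric] by (auto simp: fun_eq_iff)
  qed
  then show ?thesis using eta_pos by blast
qed

lemma piece_const:
  assumes P: "P \<in> Pcs" and x: "x \<in> {fst P<..<snd P}" and x': "x' \<in> {fst P<..<snd P}"
  shows "itin x = itin x'"
proof -
  let ?A = "{fst P<..<snd P}"
  have sub: "?A \<subseteq> {0<..<1} - D0" using Pcs_props(5)[OF P] .
  have "\<forall>a\<in>?A. eventually (\<lambda>b. itin a = itin b) (at a within ?A)"
  proof
    fix a assume a: "a \<in> ?A"
    obtain \<eta> where \<eta>: "\<eta> > 0" "\<forall>x'. 0 < x' \<and> x' < 1 \<and> \<bar>x' - a\<bar> < \<eta> \<longrightarrow> itin x' = itin a"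
      using local_const[of a] a sub by blast
    show "eventually (\<lambda>b. itin a = itin b) (at a within ?A)" unfolding eventually_at
      using \<eta> sub by (intro exI[of _ \<eta>]) (auto simp: dist_real_def)
  qed
  then show ?thesis using connected_local_const[of ?A x x' itin] x x' by auto
qed

end

context full begin

definition rep :: "real \<times> real \<Rightarrow> real" where "rep P = (fst P + snd P) / 2"
definition sig :: "real \<Rightarrow> nat \<Rightarrow> real" where "sig x r = (\<Sum>i<r. dl (lo (orb x i)))"
definition nP :: "real \<times> real \<Rightarrow> nat" where "nP P = nr (rep P)"
definition jP :: "real \<times> real \<Rightarrow> nat \<Rightarrow> nat" where "jP P r = lo (orb (rep P) r)"
definition sP :: "real \<times> real \<Rightarrow> nat \<Rightarrow> real" where "sP P r = sig (rep P) r"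
definition tP :: "real \<times> real \<Rightarrow> real" where "tP P = sP P (nP P)"
definition len :: "real \<times> real \<Rightarrow> real" where "len P = snd P - fst P"

lemma rep_in: "P \<in> Pcs \<Longrightarrow> rep P \<in> {fst P<..<snd P}"
  using Pcs_props(3) unfolding rep_def by auto

lemma x_facts:
  assumes x: "x \<in> {0<..<1} - D0"
  shows "good x (nr x)" "T x = x + sig x (nr x)" "\<And>r. r < nr x \<Longrightarrow> PS (orb x r) (orb x (Suc r))"
    "\<And>r. r \<le> nr x \<Longrightarrow> fst (orb x r) = x + sig x r"
proof -
  have xF: "x \<in> {0<..<1} - F" using notD0[OF x] by simp
  show g: "good x (nr x)" using G1[OF xF] by simp
  then have v: "valid x (nr x)" unfolding good_def by simp
  show "T x = x + sig x (nr x)" using G1[OF xF] orb_fst[OF v] unfolding sig_def by simp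
  show "\<And>r. r < nr x \<Longrightarrow> PS (orb x r) (orb x (Suc r))" using v unfolding valid_def by simp
  show "\<And>r. r \<le> nr x \<Longrightarrow> fst (orb x r) = x + sig x r"
    using orb_fst valid_mono[OF v] unfolding sig_def by simp
qed

lemma piece_facts:
  assumes P: "P \<in> Pcs" and x: "x \<in> {fst P<..<snd P}"
  shows "nr x = nP P" "\<And>r. r < nP P \<Longrightarrow> lo (orb x r) = jP P r" "\<And>r. r \<le> nP P \<Longrightarrow> sig x r = sP P r"
proof -
  have it: "itin x = itin (rep P)" using piece_const[OF P x rep_in[OF P]] .
  then show n: "nr x = nP P" unfolding itin_def nP_def by simp
  show l: "\<And>r. r < nP P \<Longrightarrow> lo (orb x r) = jP P r"
  proof -
    fix r assume "r < nP P"
    have e: "(\<lambda>r. if r < nr x then lo (orb x r) else 0) = (\<lambda>r. if r < nr (rep P) then lo (orb (rep P) r) else 0)"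
    proof -
      have "snd (itin x) = snd (itin (rep P))" using it by simp
      then show ?thesis unfolding itin_def by (simp only: snd_conv)
    qed
    have "(if r < nr x then lo (orb x r) else 0) = (if r < nr (rep P) then lo (orb (rep P) r) else 0)"
      using fun_cong[OF e, of r] by simp
    then show "lo (orb x r) = jP P r" using n \<open>r < nP P\<close> unfolding jP_def nP_def by simp
  qed
  show "\<And>r. r \<le> nP P \<Longrightarrow> sig x r = sP P r"
    unfolding sig_def sP_def using l unfolding jP_def by (intro sum.cong) auto
qed

lemma T_piece: assumes P: "P \<in> Pcs" and x: "x \<in> {fst P<..<snd P}" shows "T x = x + tP P"
proof -
  have x01: "x \<in> {0<..<1} - D0" using Pcs_props(5)[OF P] x by auto
  have "sig x (nr x) = sP P (nP P)" using piece_facts(1)[OF P x] piece_facts(3)[OF P x, of "nP P"] by simp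
  then show ?thesis using x_facts(2)[OF x01] unfolding tP_def by simp
qed

lemma tP_sum: "P \<in> Pcs \<Longrightarrow> tP P = (\<Sum>r<nP P. dl (jP P r))"
  unfolding tP_def sP_def sig_def jP_def nP_def by simp

definition Pi :: "nat \<Rightarrow> (real \<times> real) set" where
  "Pi i = {P\<in>Pcs. xpt lam (i - 1) \<le> fst P \<and> snd P \<le> xpt lam i}"

lemma xpt_D0: "i \<le> m \<Longrightarrow> xpt lam i \<in> D0" unfolding D0_def Brk_def by auto

lemma A1: assumes f: "qlin f" and i: "i \<in> {1..m}"
  shows "f (lam i) = (\<Sum>P\<in>Pi i. f (len P))"
proof -
  have l01: "0 \<le> xpt lam (i - 1)" "xpt lam i \<le> 1" using Brk_01[of "i - 1"] Brk_01[of i] i by auto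
  have lr: "xpt lam (i - 1) \<le> xpt lam i" using xpt_mono[OF pos, of "i - 1" i] i by auto
  have "(\<Sum>P\<in>Pi i. f (snd P - fst P)) = f (xpt lam i - xpt lam (i - 1))"
  proof (rule tiling[OF _ f lr])
    show "finite (Pi i)" unfolding Pi_def using finite_Pcs by simp
    show "xpt lam (i - 1) \<le> fst P \<and> fst P < snd P \<and> snd P \<le> xpt lam i" if "P \<in> Pi i" for P
      using that Pcs_props(3) unfolding Pi_def by auto
    show "{fst P<..<snd P} \<inter> {fst P'<..<snd P'} = {}" if "P \<in> Pi i" "P' \<in> Pi i" "P \<noteq> P'" for P P'
      using that Pcs_disj unfolding Pi_def by blast
    have "{xpt lam (i - 1)<..<xpt lam i} - (\<Union>P\<in>Pi i. {fst P<..<snd P}) \<subseteq> D0"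
    proof
      fix z assume z: "z \<in> {xpt lam (i - 1)<..<xpt lam i} - (\<Union>P\<in>Pi i. {fst P<..<snd P})"
      show "z \<in> D0"
      proof (rule ccontr)
        assume "z \<notin> D0"
        then have z01: "z \<in> {0<..<1} - D0" using z l01 by auto
        obtain P where P: "P \<in> Pcs" "z \<in> {fst P<..<snd P}" using Pcs_cover[OF z01] by blast
        have "xpt lam (i - 1) \<le> fst P"
        proof (rule ccontr)
          assume "\<not> ?thesis"
          then have "xpt lam (i - 1) \<in> {fst P<..<snd P}" using P z by auto
          then show False using Pcs_props(4)[OF P(1)] xpt_D0[of "i - 1"] i by auto
        qed
        moreover have "snd P \<le> xpt lam i"
        proof (rule ccontr)
          assume "\<not> ?thesis"
          then have "xpt lam i \<in> {fst P<..<snd P}" using P z by auto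
          then show False using Pcs_props(4)[OF P(1)] xpt_D0[of i] i by auto
        qed
        ultimately have "P \<in> Pi i" using P unfolding Pi_def by auto
        then show False using z P by auto
      qed
    qed
    then show "countable ({xpt lam (i - 1)<..<xpt lam i} - (\<Union>P\<in>Pi i. {fst P<..<snd P}))"
      using finite_D0 countable_finite countable_subset by blast
  qed
  then show ?thesis using xpt_diff[of i lam] i unfolding len_def by simp
qed

lemma A2: assumes i: "i \<in> {1..m}" and P: "P \<in> Pi i"
  shows "tP P = (\<Sum>j\<in>{1..m}. skew_coeff m \<rho> i j * lam j)"
proof -
  have PP: "P \<in> Pcs" using P unfolding Pi_def by simp
  have r: "rep P \<in> {fst P<..<snd P}" using rep_in[OF PP] .
  have ri: "xpt lam (i - 1) \<le> rep P" "rep P < xpt lam i" using r P unfolding Pi_def by auto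
  have "T (rep P) = rep P - xpt lam i + xtl \<rho> lam (inv_into {1..m} \<rho> i)"
    using iet_map_on[OF pos i ri] .
  moreover have "T (rep P) = rep P + tP P" using T_piece[OF PP r] .
  ultimately show ?thesis using iet_transl[OF D i] by simp
qed

lemma A3: "Pcs = (\<Union>i\<in>{1..m}. Pi i)" "\<forall>i\<in>{1..m}. \<forall>i'\<in>{1..m}. i \<noteq> i' \<longrightarrow> Pi i \<inter> Pi i' = {}"
proof -
  show "Pcs = (\<Union>i\<in>{1..m}. Pi i)"
  proof
    show "(\<Union>i\<in>{1..m}. Pi i) \<subseteq> Pcs" unfolding Pi_def by auto
    show "Pcs \<subseteq> (\<Union>i\<in>{1..m}. Pi i)"
    proof
      fix P assume P: "P \<in> Pcs"
      have r: "rep P \<in> {fst P<..<snd P}" using rep_in[OF P] .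
      then have "0 \<le> rep P" "rep P < 1" using Pcs_props(5)[OF P] by auto
      then obtain i where i: "i \<in> {1..m}" "xpt lam (i - 1) \<le> rep P" "rep P < xpt lam i"
        using idx_exists[OF pos iet_basic(2)[OF D]] by blast
      have "xpt lam (i - 1) \<le> fst P"
      proof (rule ccontr)
        assume "\<not> ?thesis"
        then have "xpt lam (i - 1) \<in> {fst P<..<snd P}" using r i by auto
        then show False using Pcs_props(4)[OF P] xpt_D0[of "i - 1"] i by auto
      qed
      moreover have "snd P \<le> xpt lam i"
      proof (rule ccontr)
        assume "\<not> ?thesis"
        then have "xpt lam i \<in> {fst P<..<snd P}" using r i by auto
        then show False using Pcs_props(4)[OF P] xpt_D0[of i] i by auto
      qed
      ultimately show "P \<in> (\<Union>i\<in>{1..m}. Pi i)" using P i(1) unfolding Pi_def by auto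
    qed
  qed
  show "\<forall>i\<in>{1..m}. \<forall>i'\<in>{1..m}. i \<noteq> i' \<longrightarrow> Pi i \<inter> Pi i' = {}"
  proof (intro ballI impI)
    fix i i' assume i: "i \<in> {1..m}" "i' \<in> {1..m}" "i \<noteq> i'"
    show "Pi i \<inter> Pi i' = {}"
    proof (rule ccontr)
      assume "Pi i \<inter> Pi i' \<noteq> {}"
      then obtain P where P: "P \<in> Pi i" "P \<in> Pi i'" by auto
      then have PP: "P \<in> Pcs" unfolding Pi_def by auto
      have r: "rep P \<in> {fst P<..<snd P}" using rep_in[OF PP] .
      have "i = i'" using idx_unique[OF pos i(1) _ _ i(2), of "rep P"] P r unfolding Pi_def by force
      then show False using i by simp
    qed
  qed
qed

lemma stepA: assumes f: "qlin f" and g: "qlin g"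
  shows "(\<Sum>i\<in>{1..m}. f (lam i) * g (\<Sum>j\<in>{1..m}. skew_coeff m \<rho> i j * lam j)) = (\<Sum>P\<in>Pcs. f (len P) * g (tP P))"
proof -
  have "(\<Sum>P\<in>Pcs. f (len P) * g (tP P)) = (\<Sum>i\<in>{1..m}. \<Sum>P\<in>Pi i. f (len P) * g (tP P))"
    unfolding A3(1) using A3(2) finite_Pcs A3(1) by (subst sum.UNION_disjoint) (auto intro: finite_subset)
  also have "\<dots> = (\<Sum>i\<in>{1..m}. f (lam i) * g (\<Sum>j\<in>{1..m}. skew_coeff m \<rho> i j * lam j))"
  proof (intro sum.cong refl)
    fix i assume i: "i \<in> {1..m}"
    have "(\<Sum>P\<in>Pi i. f (len P) * g (tP P)) = (\<Sum>P\<in>Pi i. f (len P) * g (\<Sum>j\<in>{1..m}. skew_coeff m \<rho> i j * lam j))"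
      using A2[OF i] by simp
    also have "\<dots> = f (lam i) * g (\<Sum>j\<in>{1..m}. skew_coeff m \<rho> i j * lam j)"
      using A1[OF f i] by (simp add: sum_distrib_right)
    finally show "(\<Sum>P\<in>Pi i. f (len P) * g (tP P)) = f (lam i) * g (\<Sum>j\<in>{1..m}. skew_coeff m \<rho> i j * lam j)" .
  qed
  finally show ?thesis by simp
qed

definition E :: "nat \<Rightarrow> ((real \<times> real) \<times> nat) set" where
  "E j = {(P, r). P \<in> Pcs \<and> r < nP P \<and> jP P r = j}"

lemma jP_lt: assumes "P \<in> Pcs" "r < nP P" shows "jP P r < 2*k"
proof -
  have r: "rep P \<in> {0<..<1} - D0" using rep_in[OF assms(1)] Pcs_props(5)[OF assms(1)] by auto
  show ?thesis using PS_lo[OF x_facts(3)[OF r]] assms(2) unfolding jP_def nP_def by blast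
qed

lemma stepB: assumes f: "qlin f" and g: "qlin g"
  shows "(\<Sum>P\<in>Pcs. f (len P) * g (tP P)) = (\<Sum>j<2*k. g (dl j) * (\<Sum>q\<in>E j. f (len (fst q))))"
proof -
  define S where "S = (SIGMA P:Pcs. {..<nP P})"
  have finS: "finite S" unfolding S_def using finite_Pcs by auto
  have "(\<Sum>P\<in>Pcs. f (len P) * g (tP P)) = (\<Sum>P\<in>Pcs. \<Sum>r<nP P. f (len P) * g (dl (jP P r)))"
    using tP_sum by (simp add: qlin_sum[OF g] sum_distrib_left)
  also have "\<dots> = (\<Sum>q\<in>S. f (len (fst q)) * g (dl (jP (fst q) (snd q))))"
    unfolding S_def using finite_Pcs by (subst sum.Sigma) (auto simp: case_prod_beta)
  also have "\<dots> = (\<Sum>j<2*k. \<Sum>q\<in>{q. q \<in> S \<and> jP (fst q) (snd q) = j}. f (len (fst q)) * g (dl (jP (fst q) (snd q))))"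
  proof -
    have "(\<lambda>q. jP (fst q) (snd q)) ` S \<subseteq> {..<2*k}" using jP_lt unfolding S_def by auto
    from sum.group[OF finS finite_lessThan this, of "\<lambda>q. f (len (fst q)) * g (dl (jP (fst q) (snd q)))"]
    show ?thesis by simp
  qed
  also have "\<dots> = (\<Sum>j<2*k. g (dl j) * (\<Sum>q\<in>E j. f (len (fst q))))"
  proof (intro sum.cong refl)
    fix j
    have e: "{q. q \<in> S \<and> jP (fst q) (snd q) = j} = E j" unfolding S_def E_def by auto
    have "(\<Sum>q\<in>E j. f (len (fst q)) * g (dl (jP (fst q) (snd q)))) = (\<Sum>q\<in>E j. g (dl j) * f (len (fst q)))"
      by (intro sum.cong refl) (auto simp: E_def)
    then show "(\<Sum>q\<in>{q. q \<in> S \<and> jP (fst q) (snd q) = j}. f (len (fst q)) * g (dl (jP (fst q) (snd q)))) =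
        g (dl j) * (\<Sum>q\<in>E j. f (len (fst q)))"
      unfolding e by (simp add: sum_distrib_left)
  qed
  finally show ?thesis .
qed

lemma stepD: assumes g: "qlin g" and "\<And>j. j < 2*k \<Longrightarrow> H j = g (dl j) * f (Rg j - Lf j)"
  shows "(\<Sum>j<2*k. H j) = 0"
proof -
  have bij: "bij_betw pt {..<2*k} {..<2*k}"
    by (rule bij_betw_byWitness[of _ pt]) (auto simp: pt_pt pt_lt)
  have "(\<Sum>j<2*k. H j) = (\<Sum>j<2*k. H (pt j))" using sum.reindex_bij_betw[OF bij, of H] by simp
  also have "\<dots> = (\<Sum>j<2*k. - H j)"
  proof (intro sum.cong refl)
    fix j assume j: "j \<in> {..<2*k}"
    have "g (dl (pt j)) = - g (dl j)" using dl_pt[of j] j qlin_diff[OF g, of 0 "dl j"] qlin_0[OF g] by simp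
    then show "H (pt j) = - H j" using assms(2)[of j] assms(2)[of "pt j"] j pt_lt len_pt by simp
  qed
  finally show ?thesis by (simp add: sum_negf)
qed

end

context full begin

lemma C0:
  assumes q: "(P, r) \<in> E j" and x: "x \<in> {fst P<..<snd P}"
  shows "x \<in> {0<..<1} - D0" "r < nr x" "PS (orb x r) (orb x (Suc r))" "lo (orb x r) = j"
    "fst (orb x r) = x + sP P r" "Lf j < fst (orb x r)" "fst (orb x r) < Rg j" "valid x r"
proof -
  have P: "P \<in> Pcs" "r < nP P" "jP P r = j" using q unfolding E_def by auto
  show x01: "x \<in> {0<..<1} - D0" using Pcs_props(5)[OF P(1)] x by auto
  show r: "r < nr x" using piece_facts(1)[OF P(1) x] P by simp
  show ps: "PS (orb x r) (orb x (Suc r))" using x_facts(3)[OF x01 r] .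
  show lo: "lo (orb x r) = j" using piece_facts(2)[OF P(1) x P(2)] P(3) by simp
  show "fst (orb x r) = x + sP P r" using x_facts(4)[OF x01, of r] r piece_facts(3)[OF P(1) x, of r] P(2) by simp
  show "Lf j < fst (orb x r)" "fst (orb x r) < Rg j" using ps lo unfolding PS_iff by auto
  show "valid x r" using x_facts(1)[OF x01] r valid_mono unfolding good_def by auto
qed

definition uq :: "(real \<times> real) \<times> nat \<Rightarrow> real" where "uq q = fst (fst q) + sP (fst q) (snd q)"
definition vq :: "(real \<times> real) \<times> nat \<Rightarrow> real" where "vq q = snd (fst q) + sP (fst q) (snd q)"

lemma in_uv: "z \<in> {uq (P, r)<..<vq (P, r)} \<Longrightarrow> z - sP P r \<in> {fst P<..<snd P}"
  unfolding uq_def vq_def by auto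

lemma C1: assumes q: "q \<in> E j" shows "Lf j \<le> uq q \<and> uq q < vq q \<and> vq q \<le> Rg j"
proof -
  obtain P r where qq: "q = (P, r)" by (cases q)
  have P: "P \<in> Pcs" using q qq unfolding E_def by auto
  have lt: "uq q < vq q" using Pcs_props(3)[OF P] qq unfolding uq_def vq_def by simp
  have "{uq q<..<vq q} \<subseteq> {Lf j<..<Rg j}"
  proof
    fix z assume z: "z \<in> {uq q<..<vq q}"
    define x where "x = z - sP P r"
    have x: "x \<in> {fst P<..<snd P}" using in_uv z qq unfolding x_def by simp
    have "z = fst (orb x r)" using C0(5)[OF q[unfolded qq] x] unfolding x_def by simp
    then show "z \<in> {Lf j<..<Rg j}" using C0(6,7)[OF q[unfolded qq] x] by simp
  qed
  then show ?thesis using lt greaterThanLessThan_subseteq_greaterThanLessThan by blast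
qed

lemma C2: assumes q: "q \<in> E j" and q': "q' \<in> E j" and ne: "q \<noteq> q'"
  shows "{uq q<..<vq q} \<inter> {uq q'<..<vq q'} = {}"
proof (rule ccontr)
  assume "{uq q<..<vq q} \<inter> {uq q'<..<vq q'} \<noteq> {}"
  then obtain z where z: "z \<in> {uq q<..<vq q}" "z \<in> {uq q'<..<vq q'}" by blast
  obtain P r where qq: "q = (P, r)" by (cases q)
  obtain P' r' where qq': "q' = (P', r')" by (cases q')
  define x where "x = z - sP P r"
  define x' where "x' = z - sP P' r'"
  have x: "x \<in> {fst P<..<snd P}" using in_uv z qq unfolding x_def by simp
  have x': "x' \<in> {fst P'<..<snd P'}" using in_uv z qq' unfolding x'_def by simp
  note c = C0[OF q[unfolded qq] x] and c' = C0[OF q'[unfolded qq'] x']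
  have f: "fst (orb x r) = fst (orb x' r')" using c(5) c'(5) unfolding x_def x'_def by simp
  have "snd (orb x r) = snd (orb x' r')"
    using same_lo[of "orb x r" "orb x' r'"] c(3,4) c'(3,4) f PS_ST unfolding PS_iff by metis
  then have "orb x r = orb x' r'" using f by (simp add: prod_eq_iff)
  then have "x = x'" "r = r'" using chain_inj[OF c(8) c'(8)] by auto
  moreover have "P = P'" using Pcs_disj[of P P' x] x x' \<open>x = x'\<close> q qq q' qq' unfolding E_def by auto
  ultimately show False using ne qq qq' by simp
qed

lemma covered:
  assumes x: "x \<in> {0<..<1} - D0" and r: "r0 < nr x" and j: "lo (orb x r0) = j"
  shows "fst (orb x r0) \<in> (\<Union>q\<in>E j. {uq q<..<vq q})"
proof -
  obtain P where P: "P \<in> Pcs" "x \<in> {fst P<..<snd P}" using Pcs_cover[OF x] by blast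
  have n: "nr x = nP P" using piece_facts(1)[OF P] .
  have "jP P r0 = j" using piece_facts(2)[OF P, of r0] r n j by simp
  then have q: "(P, r0) \<in> E j" using P r n unfolding E_def by auto
  have "fst (orb x r0) = x + sP P r0" using x_facts(4)[OF x, of r0] r piece_facts(3)[OF P, of r0] n by simp
  then have "fst (orb x r0) \<in> {uq (P, r0)<..<vq (P, r0)}" using P unfolding uq_def vq_def by auto
  then show ?thesis using q by blast
qed

definition Exc1 :: "real set" where "Exc1 = (\<Union>x\<in>D0. range (\<lambda>r. fst (orb x r)))"
definition Miss :: "real set" where "Miss = {0<..<1} - T ` ({0<..<1} - D0)"
definition Exc2 :: "real set" where
  "Exc2 = (\<Union>x5\<in>Miss. fst ` {p. \<exists>t. PS\<^sup>*\<^sup>* p t \<and> TH t \<and> fst t = x5})"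

lemma finite_Miss: "finite Miss"
proof -
  have "Miss \<subseteq> T ` D0"
  proof
    fix w assume w: "w \<in> Miss"
    then obtain x where x: "0 \<le> x" "x < 1" "T x = w" using iet_surj[OF D, of w] unfolding Miss_def by auto
    have "x \<in> D0"
    proof (rule ccontr)
      assume "x \<notin> D0"
      then have "x \<noteq> 0" unfolding D0_def by auto
      then have "x \<in> {0<..<1} - D0" using x \<open>x \<notin> D0\<close> by auto
      then show False using w x unfolding Miss_def by auto
    qed
    then show "w \<in> T ` D0" using x by auto
  qed
  then show ?thesis using finite_D0 finite_subset by blast
qed

lemma countable_Exc: "countable (Exc1 \<union> Exc2)"
proof -
  have "countable Exc1" unfolding Exc1_def using finite_D0 by (intro countable_UN) (auto intro: countable_finite)
  moreover have "countable Exc2" unfolding Exc2_def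
  proof (intro countable_UN countable_image)
    show "countable Miss" using finite_Miss by (rule countable_finite)
    fix x5
    show "countable {p. \<exists>t. PS\<^sup>*\<^sup>* p t \<and> TH t \<and> fst t = x5}"
    proof (cases "\<exists>t. TH t \<and> fst t = x5")
      case True
      then obtain t0 where t0: "TH t0" "fst t0 = x5" by blast
      have "{p. \<exists>t. PS\<^sup>*\<^sup>* p t \<and> TH t \<and> fst t = x5} \<subseteq> {p. PS\<^sup>*\<^sup>* p t0}"
        using TH_unique t0 by blast
      then show ?thesis using countable_preds countable_subset by blast
    next
      case False then show ?thesis by auto
    qed
  qed
  ultimately show ?thesis by simp
qed

lemma claimA:
  assumes x'': "0 < x''" "x'' < 1" and ch: "PS\<^sup>*\<^sup>* (x'', 0) p" and ps: "PS p q" and z: "fst p \<notin> Exc1"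
  shows "\<exists>x r0. x \<in> {0<..<1} - D0 \<and> r0 < nr x \<and> lo (orb x r0) = lo p \<and> fst (orb x r0) = fst p"
proof -
  obtain r0 where r0: "valid x'' r0" "orb x'' r0 = p" using PS_rtrancl_orb[OF ch] by blast
  have "x'' \<notin> D0"
  proof
    assume "x'' \<in> D0"
    then have "fst p \<in> Exc1" unfolding Exc1_def using r0(2) by (metis UN_I rangeI)
    then show False using z by simp
  qed
  then have x: "x'' \<in> {0<..<1} - D0" using x'' by auto
  have "valid x'' (Suc r0)" using valid_SucI r0 ps by simp
  then have "Suc r0 \<le> nr x''" using good_valid_le x_facts(1)[OF x] by blast
  then show ?thesis using x r0 by (intro exI[of _ x''] exI[of _ r0]) auto
qed

lemma cover_main:
  assumes j: "j < 2*k" and z: "z \<in> {Lf j<..<Rg j}" "z \<notin> Exc1" "z \<notin> Exc2"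
  shows "\<exists>x r0. x \<in> {0<..<1} - D0 \<and> r0 < nr x \<and> lo (orb x r0) = j \<and> fst (orb x r0) = z"
proof -
  obtain h where h: "PS (z, h) (z + dl j, y (pt j) + \<epsilon>)" "lo (z, h) = j"
    using start_below[OF j] z(1) by auto
  define p where "p = (z, h)"
  define q0 where "q0 = (z + dl j, y (pt j) + \<epsilon>)"
  have ps: "PS p q0" and lop: "lo p = j" and fp: "fst p = z" using h unfolding p_def q0_def by auto
  have stp: "ST p" using PS_ST[OF ps] .
  have "\<exists>x'. (\<lambda>u v. LS u v \<or> LS v u)\<^sup>*\<^sup>* p (x', 0)"
    by (rule fills_def[THEN iffD1, OF fl, rule_format, OF stp])
  then obtain x' where "(\<lambda>u v. LS u v \<or> LS v u)\<^sup>*\<^sup>* p (x', 0)" ..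
  note sr = sym_rtranclp_cases[of LS, OF LS_det LS_pred this]
  have cases: "LS\<^sup>*\<^sup>* p (x', 0) \<or> LS\<^sup>*\<^sup>* (x', 0) p" by (rule sr)
  have A: ?thesis if "0 < x''" "x'' < 1" "PS\<^sup>*\<^sup>* (x'', 0) p" for x''
  proof -
    have "fst p \<notin> Exc1" using z(2) fp by simp
    from claimA[OF that ps this] show ?thesis unfolding lop fp .
  qed
  from cases show ?thesis
  proof
    assume "LS\<^sup>*\<^sup>* (x', 0) p"
    from back_to_gamma[OF this stp] obtain x'' where "0 < x''" "x'' < 1" "PS\<^sup>*\<^sup>* (x'', 0) p" by blast
    then show ?thesis by (rule A)
  next
    assume fw: "LS\<^sup>*\<^sup>* p (x', 0)"
    show ?thesis
    proof (cases "snd p = 0")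
      case True
      then have "p = (z, 0)" using fp by (simp add: prod_eq_iff)
      moreover have "0 < z" "z < 1" using ST_fst[OF stp] fp by auto
      ultimately show ?thesis using A[of z] by simp
    next
      case False
      have s0: "snd (x', (0::real)) = 0" by simp
      from fwd_to_TH[OF fw s0 False] obtain p5 where p5: "PS\<^sup>*\<^sup>* p p5" "TH p5" by (elim exE conjE)
      define x5 where "x5 = fst p5"
      have "x5 \<notin> Miss"
      proof
        assume "x5 \<in> Miss"
        have "p \<in> {p. \<exists>t. PS\<^sup>*\<^sup>* p t \<and> TH t \<and> fst t = x5}"
          unfolding x5_def mem_Collect_eq using p5 by (intro exI[of _ p5]) simp
        then have "fst p \<in> fst ` {p. \<exists>t. PS\<^sup>*\<^sup>* p t \<and> TH t \<and> fst t = x5}" by (rule imageI)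
        then have zin: "z \<in> fst ` {p. \<exists>t. PS\<^sup>*\<^sup>* p t \<and> TH t \<and> fst t = x5}" using fp by simp
        have "z \<in> Exc2" unfolding Exc2_def using UN_I[of x5 Miss z "\<lambda>x5. fst ` {p. \<exists>t. PS\<^sup>*\<^sup>* p t \<and> TH t \<and> fst t = x5}", OF \<open>x5 \<in> Miss\<close> zin] by simp
        then show False using z(3) by simp
      qed
      moreover have "x5 \<in> {0<..<1}" using ST_fst[OF TH_ST[OF p5(2)]] unfolding x5_def by simp
      ultimately have "x5 \<in> T ` ({0<..<1} - D0)" unfolding Miss_def by blast
      then obtain x6 where x6: "x6 \<in> {0<..<1} - D0" "T x6 = x5" by (rule imageE) simp
      have xF: "x6 \<in> {0<..<1} - F" using notD0[OF x6(1)] by blast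
      have g6: "good x6 (nr x6)" "fst (orb x6 (nr x6)) = T x6" using G1[OF xF] by simp_all
      have th6: "TH (orb x6 (nr x6))" using g6(1) unfolding good_def by simp
      have "orb x6 (nr x6) = p5" using TH_unique[OF th6 p5(2)] g6(2) x6(2) unfolding x5_def by simp
      then obtain r0 where r0: "r0 \<le> nr x6" "orb x6 r0 = p"
      proof -
        have "valid x6 (nr x6)" using g6(1) unfolding good_def by simp
        from PS_rtrancl_into_orbit[OF p5(1) this \<open>orb x6 (nr x6) = p5\<close>]
        obtain r where "r \<le> nr x6" "orb x6 r = p" by (elim exE conjE)
        then show ?thesis by (rule that)
      qed
      have "r0 \<noteq> nr x6" using r0(2) th6 PS_TH_excl[OF ps] by auto
      then show ?thesis using x6 r0 lop fp by (intro exI[of _ x6] exI[of _ r0]) auto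
    qed
  qed
qed

lemma stepC: assumes f: "qlin f" and j: "j < 2*k"
  shows "(\<Sum>q\<in>E j. f (len (fst q))) = f (Rg j - Lf j)"
proof -
  have finE: "finite (E j)"
  proof -
    have "E j \<subseteq> Sigma Pcs (\<lambda>P. {..<nP P})" unfolding E_def by auto
    moreover have "finite (Sigma Pcs (\<lambda>P. {..<nP P}))" by (rule finite_SigmaI[OF finite_Pcs]) simp
    ultimately show ?thesis by (rule finite_subset)
  qed
  have "(\<Sum>q\<in>E j. f (vq q - uq q)) = f (Rg j - Lf j)"
  proof (rule tiling[OF finE f])
    show "Lf j \<le> Rg j" using LR[OF j] by simp
    show "\<And>q. q \<in> E j \<Longrightarrow> Lf j \<le> uq q \<and> uq q < vq q \<and> vq q \<le> Rg j" by (rule C1)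
    show "\<And>q q'. q \<in> E j \<Longrightarrow> q' \<in> E j \<Longrightarrow> q \<noteq> q' \<Longrightarrow> {uq q<..<vq q} \<inter> {uq q'<..<vq q'} = {}"
      by (rule C2)
    have "{Lf j<..<Rg j} - (\<Union>q\<in>E j. {uq q<..<vq q}) \<subseteq> Exc1 \<union> Exc2"
    proof
      fix z assume z: "z \<in> {Lf j<..<Rg j} - (\<Union>q\<in>E j. {uq q<..<vq q})"
      show "z \<in> Exc1 \<union> Exc2"
      proof (rule ccontr)
        assume "z \<notin> Exc1 \<union> Exc2"
        then have e: "z \<notin> Exc1" "z \<notin> Exc2" by simp_all
        have zz: "z \<in> {Lf j<..<Rg j}" "z \<notin> (\<Union>q\<in>E j. {uq q<..<vq q})" using z by simp_all
        from cover_main[OF j zz(1) e] obtain x r0 where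
          xr: "x \<in> {0<..<1} - D0" "r0 < nr x" "lo (orb x r0) = j" "fst (orb x r0) = z" by (elim exE conjE)
        have "fst (orb x r0) \<in> (\<Union>q\<in>E j. {uq q<..<vq q})" by (rule covered[OF xr(1-3)])
        then show False using xr(4) zz(2) by simp
      qed
    qed
    then show "countable ({Lf j<..<Rg j} - (\<Union>q\<in>E j. {uq q<..<vq q}))"
      by (rule countable_subset[OF _ countable_Exc])
  qed
  moreover have "vq q - uq q = len (fst q)" for q unfolding uq_def vq_def len_def by simp
  ultimately show ?thesis by simp
qed

lemma main_zero: assumes f: "qlin f" and g: "qlin g"
  shows "(\<Sum>i\<in>{1..m}. f (lam i) * g (\<Sum>j\<in>{1..m}. skew_coeff m \<rho> i j * lam j)) = 0"
proof -
  have "(\<Sum>i\<in>{1..m}. f (lam i) * g (\<Sum>j\<in>{1..m}. skew_coeff m \<rho> i j * lam j))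
      = (\<Sum>j<2*k. g (dl j) * (\<Sum>q\<in>E j. f (len (fst q))))" using stepA[OF f g] stepB[OF f g] by simp
  also have "\<dots> = 0" using stepD[OF g] stepC[OF f] by simp
  finally show ?thesis .
qed

end

theorem proposition11:
  fixes k :: nat and a b c d y :: "nat \<Rightarrow> real" and \<epsilon> :: real
    and m :: nat and \<rho> :: "nat \<Rightarrow> nat" and lam :: "nat \<Rightarrow> real"
  assumes "op_system k a b c d"
    and "admissible k y"
    and "eps_ok k y \<epsilon>"
    and "iet_data m \<rho> lam"
    and "\<exists>F. finite F \<and> (\<forall>x\<in>{0<..<1} - F. first_return k a b c d y \<epsilon> x (iet_map m \<rho> lam x))"
    and "fills k a b c d y \<epsilon>"
  shows "rich m \<rho> (restriction_space m lam)"
proof -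
  obtain F where F: "finite F" "\<forall>x\<in>{0<..<1} - F. first_return k a b c d y \<epsilon> x (iet_map m \<rho> lam x)"
    using assms(5) by blast
  interpret full k a b c d y \<epsilon> m \<rho> lam F
    by unfold_locales (use assms F in auto)
  show ?thesis by (rule rich_of) (rule main_zero)
qed

end
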